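(* For every function $u:\Omega\to\mathbb R$ depending on only finitely many coordinates, every complex Borel measure $\mu$ on $\Omega$ with $\mathrm{Var}\,\mu<\infty$, and every $\mathbf p\in\mathbb Z^d$, \[\mathrm{Var}_{\mathbf p}(u\mu)\le\sup|u|\;\mathrm{Var}_{\mathbf p}(\mu)+\mathrm{Lip}_{\mathbf p}(u)\,|\mu|.\]
   Context: $I=[0,1]$, $\Omega=I^{\mathbb Z^d}$ with the product topology. For a complex Borel measure $\mu$ on $\Omega$: $\mathrm{Var}_{\mathbf p}\mu=\sup|\mu(\partial_{\mathbf p}\varphi)|$ over functions $\varphi$ depending on finitely many coordinates, $C^1$ in $x_{\mathbf p}$, with $\sup|\varphi|\le1$; $\mathrm{Var}\,\mu=\sup_{\mathbf p}\mathrm{Var}_{\mathbf p}\mu$; $|\mu|=\sup\{|\mu(\varphi)|:\ \sup|\varphi|\le1\}$ is the total variation norm; $u\mu$ is the measure with density $u$ w.r.t. $\mu$. For $u:\Omega\to\mathbb R$, $\mathrm{Lip}_{\mathbf p}(u)=\sup_{\mathbf x\in I^{\mathbb Z^d\setminus\{\mathbf p\}}}\sup_{x_{\mathbf p}\ne x'_{\mathbf p}\in I}\frac{u(x_{\mathbf p},\mathbf x)-u(x'_{\mathbf p},\mathbf x)}{|x_{\mathbf p}-x'_{\mathbf p}|}$. *)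

theory Defs
  imports "HOL-Analysis.Analysis"
begin

text \<open>Lattice sites: Z^d is modelled as int^'d ('d a finite index type, d = CARD('d)).
  Configurations: functions (int^'d) => real; Omega = I^(Z^d), I = [0,1], with the
  product topology (the function-space topology of HOL-Analysis, restricted to Omega).\<close>

type_synonym ('d) config = "(int^('d::finite)) \<Rightarrow> real"

definition Omega :: "'d config set" where
  "Omega = {x. \<forall>q. x q \<in> {0..1}}"

definition OmegaB :: "'d config measure" where
  "OmegaB = restrict_space borel Omega"

text \<open>A complex Borel measure mu on Omega, represented via its Jordan decomposition
  mu = (m1 - m2) + i (m3 - m4) with m1..m4 finite Borel measures on Omega.\<close>
type_synonym 'd cmeasure = "'d config measure \<times> 'd config measure \<times> 'd config measure \<times> 'd config measure"

definition is_cborel :: "'d cmeasure \<Rightarrow> bool" where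
  "is_cborel \<mu> = (case \<mu> of (m1, m2, m3, m4) \<Rightarrow>
     (\<forall>m\<in>{m1, m2, m3, m4}. finite_measure m \<and> sets m = sets OmegaB))"

definition cint :: "'d cmeasure \<Rightarrow> ('d config \<Rightarrow> complex) \<Rightarrow> complex" where
  "cint \<mu> \<phi> = (case \<mu> of (m1, m2, m3, m4) \<Rightarrow>
     (integral\<^sup>L m1 \<phi> - integral\<^sup>L m2 \<phi>) + \<i> * (integral\<^sup>L m3 \<phi> - integral\<^sup>L m4 \<phi>))"

definition depends_finitely :: "('d config \<Rightarrow> 'b) \<Rightarrow> bool" where
  "depends_finitely f = (\<exists>F. finite F \<and>
     (\<forall>x\<in>Omega. \<forall>y\<in>Omega. (\<forall>q\<in>F. x q = y q) \<longrightarrow> f x = f y))"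

definition pderiv_at :: "int^'d \<Rightarrow> ('d config \<Rightarrow> complex) \<Rightarrow> 'd config \<Rightarrow> complex" where
  "pderiv_at p \<phi> x = vector_derivative (\<lambda>s. \<phi> (x(p := s))) (at (x p) within {0..1})"

definition test_fun :: "int^'d \<Rightarrow> ('d config \<Rightarrow> complex) \<Rightarrow> bool" where
  "test_fun p \<phi> = (depends_finitely \<phi> \<and> continuous_on Omega \<phi> \<and>
     (\<forall>x\<in>Omega. ((\<lambda>s. \<phi> (x(p := s))) has_vector_derivative pderiv_at p \<phi> x)
                   (at (x p) within {0..1})) \<and>
     continuous_on Omega (pderiv_at p \<phi>) \<and>
     (\<forall>x\<in>Omega. cmod (\<phi> x) \<le> 1))"

text \<open>Var_p of a measure given by its integration functional L (L phi = mu(phi)).\<close>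
definition VarP :: "int^'d \<Rightarrow> (('d config \<Rightarrow> complex) \<Rightarrow> complex) \<Rightarrow> ereal" where
  "VarP p L = (SUP \<phi>\<in>{\<phi>. test_fun p \<phi>}. ereal (cmod (L (pderiv_at p \<phi>))))"

definition VarT :: "((('d::finite) config \<Rightarrow> complex) \<Rightarrow> complex) \<Rightarrow> ereal" where
  "VarT L = (SUP p::int^'d. VarP p L)"

definition tvnorm :: "'d cmeasure \<Rightarrow> ereal" where
  "tvnorm \<mu> = (SUP \<phi>\<in>{\<phi>. \<phi> \<in> borel_measurable OmegaB \<and> (\<forall>x\<in>Omega. cmod (\<phi> x) \<le> 1)}.
                 ereal (cmod (cint \<mu> \<phi>)))"

definition dens :: "('d config \<Rightarrow> real) \<Rightarrow> 'd cmeasure \<Rightarrow> ('d config \<Rightarrow> complex) \<Rightarrow> complex" where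
  "dens u \<mu> \<phi> = cint \<mu> (\<lambda>x. complex_of_real (u x) * \<phi> x)"

definition LipP :: "int^'d \<Rightarrow> ('d config \<Rightarrow> real) \<Rightarrow> ereal" where
  "LipP p u = (SUP (x, t, t')\<in>{(x, t, t'). x \<in> Omega \<and> t \<in> {0..1} \<and> t' \<in> {0..1} \<and> t \<noteq> t'}.
      ereal ((u (x(p := t)) - u (x(p := t'))) / \<bar>t - t'\<bar>))"

definition supabs :: "('d config \<Rightarrow> real) \<Rightarrow> real" where
  "supabs u = (SUP x\<in>Omega. \<bar>u x\<bar>)"

end

theory Submission
  imports Defs
begin

lemma intb:
  assumes "finite_measure M" "sets M = sets borel" "f \<in> borel_measurable borel" "bounded (range f)"
  shows "integrable M (f::'a::topological_space \<Rightarrow> real)"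
proof -
  from assms(4) obtain B where B: "\<forall>x\<in>range f. norm x \<le> B" unfolding bounded_iff by blast
  have m: "f \<in> borel_measurable M" unfolding measurable_cong_sets[OF assms(2) refl] by (rule assms(3))
  have ae: "AE x in M. norm (f x) \<le> B" using B by blast
  show ?thesis
    by (rule finite_measure.integrable_const_bound[OF assms(1) ae m])
qed

lemma reg_approx:
  fixes M :: "'a::polish_space measure"
  assumes fm: "finite_measure M" and sb: "sets M = sets borel" and A: "A \<in> sets borel" and e: "e > 0"
  shows "\<exists>K U. compact K \<and> K \<subseteq> A \<and> open U \<and> A \<subseteq> U \<and> measure M (U - K) < e"
proof -
  interpret finite_measure M by (rule fm)
  have fin: "emeasure M (space M) \<noteq> \<infinity>" by simp
  note inn = inner_regular[OF sb fin A] and out = outer_regular[OF sb fin A]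
  define a where "a = measure M A"
  have Asets: "A \<in> sets M" using A sb by simp
  have ea: "emeasure M A = ennreal a" using Asets by (simp add: a_def emeasure_eq_measure)
  have "\<exists>K. compact K \<and> K \<subseteq> A \<and> a - e/2 < measure M K"
  proof (cases "a - e/2 < 0")
    case True then show ?thesis using e by (intro exI[of _ "{}"]) auto
  next
    case False
    then have "ennreal (a - e/2) < ennreal a" using e by (subst ennreal_less_iff) auto
    moreover have "(SUP K \<in> {K. K \<subseteq> A \<and> compact K}. emeasure M K) = ennreal a"
      using trans[OF inn[symmetric] ea] .
    ultimately have "ennreal (a - e/2) < (SUP K \<in> {K. K \<subseteq> A \<and> compact K}. emeasure M K)"
      by simp
    then obtain K where K0: "K \<in> {K. K \<subseteq> A \<and> compact K}" "ennreal (a - e/2) < emeasure M K"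
      unfolding less_SUP_iff by blast
    then have K: "K \<subseteq> A" "compact K" "ennreal (a - e/2) < emeasure M K" by auto
    have "K \<in> sets M" using K sb by (simp add: compact_imp_closed borel_closed)
    then have "a - e/2 < measure M K" using K(3) False
      by (simp add: emeasure_eq_measure ennreal_less_iff)
    then show ?thesis using K by blast
  qed
  then obtain K where K: "compact K" "K \<subseteq> A" "a - e/2 < measure M K" by blast
  have "ennreal a < ennreal (a + e/2)" using e measure_nonneg[of M A]
    by (subst ennreal_less_iff) (auto simp: a_def)
  moreover have "(INF U \<in> {U. A \<subseteq> U \<and> open U}. emeasure M U) = ennreal a"
    using trans[OF out[symmetric] ea] .
  ultimately have "(INF U \<in> {U. A \<subseteq> U \<and> open U}. emeasure M U) < ennreal (a + e/2)"
    by simp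
  then obtain U where U0: "U \<in> {U. A \<subseteq> U \<and> open U}" "emeasure M U < ennreal (a + e/2)"
    unfolding INF_less_iff by blast
  then have U: "A \<subseteq> U" "open U" "emeasure M U < ennreal (a + e/2)" by auto
  have Us: "U \<in> sets M" using U sb by (simp add: borel_open)
  have "measure M U < a + e/2" using U(3) Us
    by (simp add: emeasure_eq_measure ennreal_less_iff)
  moreover have Ks: "K \<in> sets M" using K sb by (simp add: compact_imp_closed borel_closed)
  moreover have "measure M (U - K) = measure M U - measure M K"
    using K U Us Ks by (intro finite_measure_Diff) auto
  ultimately have "measure M (U - K) < e" using K by linarith
  then show ?thesis using K U by blast
qed


definition approxc :: "'a::polish_space measure set \<Rightarrow> ('a \<Rightarrow> real) \<Rightarrow> bool" where
  "approxc Ms h \<longleftrightarrow> (\<forall>e>0. \<exists>g. continuous_on UNIV g \<and> bounded (range g) \<and>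
      (\<forall>M\<in>Ms. (\<integral>x. \<bar>g x - h x\<bar> \<partial>M) < e))"

lemma cont_borel: "continuous_on UNIV (g::'a::topological_space \<Rightarrow> real) \<Longrightarrow> g \<in> borel_measurable borel"
  by (simp add: borel_measurable_continuous_onI)

lemma approx_ind:
  fixes Ms :: "'a::polish_space measure set"
  assumes Ms: "finite Ms" "\<And>M. M \<in> Ms \<Longrightarrow> finite_measure M \<and> sets M = sets borel"
    and A: "A \<in> sets borel"
  shows "approxc Ms (indicator A)"
  unfolding approxc_def
proof (intro allI impI)
  fix e :: real assume e: "e > 0"
  have "\<forall>M\<in>Ms. \<exists>K U. compact K \<and> K \<subseteq> A \<and> open U \<and> A \<subseteq> U \<and> measure M (U - K) < e"
  proof
    fix M assume M: "M \<in> Ms"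
    show "\<exists>K U. compact K \<and> K \<subseteq> A \<and> open U \<and> A \<subseteq> U \<and> measure M (U - K) < e"
      using Ms(2)[OF M] A e by (intro reg_approx) auto
  qed
  then obtain K U where KU: "\<And>M. M\<in>Ms \<Longrightarrow> compact (K M) \<and> K M \<subseteq> A \<and> open (U M) \<and> A \<subseteq> U M \<and> measure M (U M - K M) < e"
    by metis
  define KK where "KK = (\<Union>M\<in>Ms. K M)"
  define UU where "UU = (\<Inter>M\<in>Ms. U M)"
  have cK: "closed KK" unfolding KK_def using KU Ms(1) by (intro compact_imp_closed compact_UN) auto
  have oU: "open UU" unfolding UU_def using KU Ms(1) by (intro open_INT) auto
  have KA: "KK \<subseteq> A" "A \<subseteq> UU" using KU unfolding KK_def UU_def by auto
  have ns: "normal_space (euclidean :: 'a topology)"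
    by (simp add: metrizable_imp_normal_space metrizable_space_euclidean)
  have c1: "closedin euclidean (-UU)" using oU by (simp add: closed_closedin[symmetric] closed_Compl)
  have c2: "closedin euclidean KK" using cK by (simp add: closed_closedin[symmetric])
  have dj: "disjnt (-UU) KK" using KA by (auto simp: disjnt_def)
  obtain f where f: "continuous_map euclidean (top_of_set {0..1::real}) f" "f ` (- UU) \<subseteq> {0}" "f ` KK \<subseteq> {1}"
    using Urysohn_lemma[OF ns c1 c2 dj, of 0 1] by auto
  have fc: "continuous_on UNIV f" and fr: "\<And>x. f x \<in> {0..1}"
    using f(1) unfolding continuous_map_in_subtopology by auto
  show "\<exists>g. continuous_on UNIV g \<and> bounded (range g) \<and> (\<forall>M\<in>Ms. (\<integral>x. \<bar>g x - indicator A x\<bar> \<partial>M) < e)"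
  proof (intro exI conjI ballI)
    show "continuous_on UNIV f" by (rule fc)
    show "bounded (range f)" using fr by (intro boundedI[of _ 1]) auto
    fix M assume M: "M \<in> Ms"
    have fmM: "finite_measure M" and sM: "sets M = sets borel" using Ms(2)[OF M] by auto
    have D: "U M - K M \<in> sets borel" using KU[OF M] by (auto intro: borel_open borel_closed compact_imp_closed)
    have pw: "\<bar>f x - indicator A x\<bar> \<le> indicator (U M - K M) x" for x
    proof -
      have "x \<in> K M \<Longrightarrow> x \<in> KK" using M unfolding KK_def by auto
      moreover have "x \<notin> U M \<Longrightarrow> x \<in> -UU" using M unfolding UU_def by auto
      ultimately show ?thesis using f(2,3) fr[of x] KU[OF M]
        by (auto simp: indicator_def)
    qed
    have fb[measurable]: "f \<in> borel_measurable borel" using fc by (rule cont_borel)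
    note A[measurable] D[measurable]
    have bd1: "bounded (range (\<lambda>x. \<bar>f x - indicator A x\<bar>))"
    proof (rule boundedI[of _ 1])
      fix y assume "y \<in> range (\<lambda>x. \<bar>f x - indicator A x\<bar>)"
      then obtain x where "y = \<bar>f x - indicator A x\<bar>" by blast
      then show "norm y \<le> 1" using fr[of x] by (auto simp: indicator_def)
    qed
    have bd2: "bounded (range (indicator (U M - K M) :: _ \<Rightarrow> real))"
      by (rule boundedI[of _ 1]) (auto simp: indicator_def)
    have i1: "integrable M (\<lambda>x. \<bar>f x - indicator A x\<bar>)"
      by (rule intb[OF fmM sM _ bd1]) measurable
    have i2: "integrable M (indicator (U M - K M) :: _ \<Rightarrow> real)"
      by (rule intb[OF fmM sM _ bd2]) measurable
    have "(\<integral>x. \<bar>f x - indicator A x\<bar> \<partial>M) \<le> (\<integral>x. indicator (U M - K M) x \<partial>M)"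
      by (rule integral_mono[OF i1 i2 pw])
    also have "\<dots> = measure M (U M - K M)"
      using sM D by (simp add: sets_eq_imp_space_eq[OF sM])
    also have "\<dots> < e" using KU[OF M] by simp
    finally show "(\<integral>x. \<bar>f x - indicator A x\<bar> \<partial>M) < e" .
  qed
qed


lemma bnd_iff: "bounded (range (f::'a \<Rightarrow> real)) \<longleftrightarrow> (\<exists>B. \<forall>x. \<bar>f x\<bar> \<le> B)"
  unfolding bounded_iff by auto

lemma intb2:
  assumes "finite_measure M" "sets M = sets borel" "f \<in> borel_measurable borel" "\<And>x. \<bar>f x\<bar> \<le> B"
  shows "integrable M (f::'a::topological_space \<Rightarrow> real)"
  by (rule intb[OF assms(1-3)]) (use assms(4) in \<open>auto simp: bnd_iff\<close>)

lemma approx_add: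
  fixes Ms :: "'a::polish_space measure set"
  assumes Ms: "\<And>M. M \<in> Ms \<Longrightarrow> finite_measure M \<and> sets M = sets borel"
    and u[measurable]: "u \<in> borel_measurable borel" and v[measurable]: "v \<in> borel_measurable borel"
    and bu: "bounded (range u)" and bv: "bounded (range v)"
    and au: "approxc Ms u" and av: "approxc Ms v"
    and s: "s = 1 \<or> s = -1"
  shows "approxc Ms (\<lambda>x. u x + s * v x)"
  unfolding approxc_def
proof (intro allI impI)
  fix e :: real assume e: "e > 0"
  obtain g1 where g1: "continuous_on UNIV g1" "bounded (range g1)" "\<And>M. M\<in>Ms \<Longrightarrow> (\<integral>x. \<bar>g1 x - u x\<bar> \<partial>M) < e/2"
    using au e unfolding approxc_def by (meson half_gt_zero)
  obtain g2 where g2: "continuous_on UNIV g2" "bounded (range g2)" "\<And>M. M\<in>Ms \<Longrightarrow> (\<integral>x. \<bar>g2 x - v x\<bar> \<partial>M) < e/2"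
    using av e unfolding approxc_def by (meson half_gt_zero)
  have [measurable]: "g1 \<in> borel_measurable borel" "g2 \<in> borel_measurable borel"
    using g1(1) g2(1) by (auto intro: cont_borel)
  obtain B1 where B1: "\<And>x. \<bar>g1 x\<bar> \<le> B1" using g1(2) unfolding bnd_iff by blast
  obtain B2 where B2: "\<And>x. \<bar>g2 x\<bar> \<le> B2" using g2(2) unfolding bnd_iff by blast
  obtain B3 where B3: "\<And>x. \<bar>u x\<bar> \<le> B3" using bu unfolding bnd_iff by blast
  obtain B4 where B4: "\<And>x. \<bar>v x\<bar> \<le> B4" using bv unfolding bnd_iff by blast
  have sabs: "\<bar>s\<bar> = 1" using s by auto
  show "\<exists>g. continuous_on UNIV g \<and> bounded (range g) \<and> (\<forall>M\<in>Ms. (\<integral>x. \<bar>g x - (u x + s * v x)\<bar> \<partial>M) < e)"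
  proof (intro exI conjI ballI)
    show "continuous_on UNIV (\<lambda>x. g1 x + s * g2 x)" using g1(1) g2(1) by (intro continuous_intros)
    show "bounded (range (\<lambda>x. g1 x + s * g2 x))" unfolding bnd_iff
    proof (intro exI allI)
      fix x show "\<bar>g1 x + s * g2 x\<bar> \<le> B1 + B2" using B1[of x] B2[of x] s by auto
    qed
    fix M assume M: "M \<in> Ms"
    have fm: "finite_measure M" and sM: "sets M = sets borel" using Ms[OF M] by auto
    have i1: "integrable M (\<lambda>x. \<bar>g1 x - u x\<bar>)"
    proof (rule intb2[OF fm sM, where B="B1+B3"])
      show "(\<lambda>x. \<bar>g1 x - u x\<bar>) \<in> borel_measurable borel" by measurable
      fix x show "\<bar>\<bar>g1 x - u x\<bar>\<bar> \<le> B1+B3" using B1[of x] B3[of x] by auto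
    qed
    have i2: "integrable M (\<lambda>x. \<bar>g2 x - v x\<bar>)"
    proof (rule intb2[OF fm sM, where B="B2+B4"])
      show "(\<lambda>x. \<bar>g2 x - v x\<bar>) \<in> borel_measurable borel" by measurable
      fix x show "\<bar>\<bar>g2 x - v x\<bar>\<bar> \<le> B2+B4" using B2[of x] B4[of x] by auto
    qed
    have i3: "integrable M (\<lambda>x. \<bar>(g1 x + s * g2 x) - (u x + s * v x)\<bar>)"
    proof (rule intb2[OF fm sM, where B="B1+B3+B2+B4"])
      show "(\<lambda>x. \<bar>(g1 x + s * g2 x) - (u x + s * v x)\<bar>) \<in> borel_measurable borel" by measurable
      fix x show "\<bar>\<bar>(g1 x + s * g2 x) - (u x + s * v x)\<bar>\<bar> \<le> B1+B3+B2+B4"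
        using B1[of x] B2[of x] B3[of x] B4[of x] s by auto
    qed
    have "(\<integral>x. \<bar>(g1 x + s * g2 x) - (u x + s * v x)\<bar> \<partial>M) \<le> (\<integral>x. \<bar>g1 x - u x\<bar> + \<bar>g2 x - v x\<bar> \<partial>M)"
    proof (rule integral_mono[OF i3 Bochner_Integration.integrable_add[OF i1 i2]])
      fix x show "\<bar>(g1 x + s * g2 x) - (u x + s * v x)\<bar> \<le> \<bar>g1 x - u x\<bar> + \<bar>g2 x - v x\<bar>"
        using s by auto
    qed
    also have "\<dots> = (\<integral>x. \<bar>g1 x - u x\<bar> \<partial>M) + (\<integral>x. \<bar>g2 x - v x\<bar> \<partial>M)"
      by (rule Bochner_Integration.integral_add[OF i1 i2])
    also have "\<dots> < e" using g1(3)[OF M] g2(3)[OF M] by simp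
    finally show "(\<integral>x. \<bar>(g1 x + s * g2 x) - (u x + s * v x)\<bar> \<partial>M) < e" .
  qed
qed

lemma approx_zero: "approxc Ms (\<lambda>x. 0)"
  unfolding approxc_def by (intro allI impI exI[of _ "\<lambda>x. 0"]) auto

lemma approx_cmult:
  fixes Ms :: "'a::polish_space measure set"
  assumes au: "approxc Ms u" and c: "c > 0"
  shows "approxc Ms (\<lambda>x. c * u x)"
  unfolding approxc_def
proof (intro allI impI)
  fix e :: real assume e: "e > 0"
  obtain g where g: "continuous_on UNIV g" "bounded (range g)" "\<And>M. M\<in>Ms \<Longrightarrow> (\<integral>x. \<bar>g x - u x\<bar> \<partial>M) < e/c"
    using au e c unfolding approxc_def by (meson divide_pos_pos)
  obtain B where B: "\<And>x. \<bar>g x\<bar> \<le> B" using g(2) unfolding bnd_iff by blast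
  show "\<exists>g. continuous_on UNIV g \<and> bounded (range g) \<and> (\<forall>M\<in>Ms. (\<integral>x. \<bar>g x - c * u x\<bar> \<partial>M) < e)"
  proof (intro exI conjI ballI)
    show "continuous_on UNIV (\<lambda>x. c * g x)" using g(1) by (intro continuous_intros)
    show "bounded (range (\<lambda>x. c * g x))" unfolding bnd_iff
      by (rule exI[of _ "c*B"]) (use B c in \<open>auto simp: abs_mult intro: mult_left_mono\<close>)
    fix M assume M: "M \<in> Ms"
    have "(\<integral>x. \<bar>c * g x - c * u x\<bar> \<partial>M) = c * (\<integral>x. \<bar>g x - u x\<bar> \<partial>M)"
      using c by (simp add: right_diff_distrib[symmetric] abs_mult)
    also have "\<dots> < c * (e / c)" using g(3)[OF M] c by (intro mult_strict_left_mono) auto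
    also have "\<dots> = e" using c by simp
    finally show "(\<integral>x. \<bar>c * g x - c * u x\<bar> \<partial>M) < e" .
  qed
qed


lemma approx_seq:
  fixes Ms :: "'a::polish_space measure set"
  assumes Ms: "finite Ms" "\<And>M. M \<in> Ms \<Longrightarrow> finite_measure M \<and> sets M = sets borel"
    and U[measurable]: "\<And>i. U i \<in> borel_measurable borel" and u[measurable]: "u \<in> borel_measurable borel"
    and lim: "\<And>x. (\<lambda>i. U i x) \<longlonglongrightarrow> u x"
    and bnd: "\<And>i x. \<bar>U i x\<bar> \<le> B"
    and aU: "\<And>i. approxc Ms (U i)"
  shows "approxc Ms u"
  unfolding approxc_def
proof (intro allI impI)
  fix e :: real assume e: "e > 0"
  have ub: "\<bar>u x\<bar> \<le> B" for x
  proof -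
    have "(\<lambda>i. \<bar>U i x\<bar>) \<longlonglongrightarrow> \<bar>u x\<bar>" by (rule tendsto_rabs[OF lim])
    then show ?thesis using bnd by (intro Lim_bounded[where M=0]) auto
  qed
  have conv: "(\<lambda>i. (\<integral>x. \<bar>U i x - u x\<bar> \<partial>M)) \<longlonglongrightarrow> 0" if M: "M \<in> Ms" for M
  proof -
    have fm: "finite_measure M" and sM: "sets M = sets borel" using Ms(2)[OF M] by auto
    have mU: "(\<lambda>x. \<bar>U i x - u x\<bar>) \<in> borel_measurable M" for i
      unfolding measurable_cong_sets[OF sM refl] by measurable
    have m0: "(\<lambda>x. 0::real) \<in> borel_measurable M" by simp
    have iw: "integrable M (\<lambda>x. 2 * B)" using fm by (rule finite_measure.integrable_const)
    have "(\<lambda>i. (\<integral>x. \<bar>U i x - u x\<bar> \<partial>M)) \<longlonglongrightarrow> (\<integral>x. 0 \<partial>M)"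
    proof (rule integral_dominated_convergence[OF m0 mU iw])
      show "AE x in M. (\<lambda>i. \<bar>U i x - u x\<bar>) \<longlonglongrightarrow> 0"
      proof (rule AE_I2)
        fix x
        have "(\<lambda>i. U i x - u x) \<longlonglongrightarrow> 0" using lim[of x] by (simp add: LIM_zero)
        then show "(\<lambda>i. \<bar>U i x - u x\<bar>) \<longlonglongrightarrow> 0" by (rule tendsto_rabs_zero)
      qed
      fix i show "AE x in M. norm \<bar>U i x - u x\<bar> \<le> 2 * B"
      proof (rule AE_I2)
        fix x show "norm \<bar>U i x - u x\<bar> \<le> 2 * B" using bnd[of i x] ub[of x] by auto
      qed
    qed
    then show ?thesis by simp
  qed
  have "eventually (\<lambda>i. \<forall>M\<in>Ms. (\<integral>x. \<bar>U i x - u x\<bar> \<partial>M) < e/2) sequentially"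
  proof (rule eventually_ball_finite[OF Ms(1)], rule ballI)
    fix M assume M: "M \<in> Ms"
    show "eventually (\<lambda>i. (\<integral>x. \<bar>U i x - u x\<bar> \<partial>M) < e/2) sequentially"
      using order_tendstoD(2)[OF conv[OF M], of "e/2"] e by simp
  qed
  then obtain i where i: "\<And>M. M\<in>Ms \<Longrightarrow> (\<integral>x. \<bar>U i x - u x\<bar> \<partial>M) < e/2"
    unfolding eventually_sequentially by blast
  obtain g where g: "continuous_on UNIV g" "bounded (range g)" "\<And>M. M\<in>Ms \<Longrightarrow> (\<integral>x. \<bar>g x - U i x\<bar> \<partial>M) < e/2"
    using aU[of i] e unfolding approxc_def by (meson half_gt_zero)
  have [measurable]: "g \<in> borel_measurable borel" using g(1) by (rule cont_borel)
  obtain Bg where Bg: "\<And>x. \<bar>g x\<bar> \<le> Bg" using g(2) unfolding bnd_iff by blast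
  show "\<exists>g. continuous_on UNIV g \<and> bounded (range g) \<and> (\<forall>M\<in>Ms. (\<integral>x. \<bar>g x - u x\<bar> \<partial>M) < e)"
  proof (intro exI conjI ballI)
    show "continuous_on UNIV g" "bounded (range g)" using g by auto
    fix M assume M: "M \<in> Ms"
    have fm: "finite_measure M" and sM: "sets M = sets borel" using Ms(2)[OF M] by auto
    have i1: "integrable M (\<lambda>x. \<bar>g x - u x\<bar>)"
    proof (rule intb2[OF fm sM, where B="Bg+B"])
      show "(\<lambda>x. \<bar>g x - u x\<bar>) \<in> borel_measurable borel" by measurable
      fix x show "\<bar>\<bar>g x - u x\<bar>\<bar> \<le> Bg+B" using Bg[of x] ub[of x] by auto
    qed
    have i2: "integrable M (\<lambda>x. \<bar>g x - U i x\<bar>)"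
    proof (rule intb2[OF fm sM, where B="Bg+B"])
      show "(\<lambda>x. \<bar>g x - U i x\<bar>) \<in> borel_measurable borel" by measurable
      fix x show "\<bar>\<bar>g x - U i x\<bar>\<bar> \<le> Bg+B" using Bg[of x] bnd[of i x] by auto
    qed
    have i3: "integrable M (\<lambda>x. \<bar>U i x - u x\<bar>)"
    proof (rule intb2[OF fm sM, where B="B+B"])
      show "(\<lambda>x. \<bar>U i x - u x\<bar>) \<in> borel_measurable borel" by measurable
      fix x show "\<bar>\<bar>U i x - u x\<bar>\<bar> \<le> B+B" using bnd[of i x] ub[of x] by auto
    qed
    have "(\<integral>x. \<bar>g x - u x\<bar> \<partial>M) \<le> (\<integral>x. \<bar>g x - U i x\<bar> + \<bar>U i x - u x\<bar> \<partial>M)"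
      by (rule integral_mono[OF i1 Bochner_Integration.integrable_add[OF i2 i3]]) auto
    also have "\<dots> = (\<integral>x. \<bar>g x - U i x\<bar> \<partial>M) + (\<integral>x. \<bar>U i x - u x\<bar> \<partial>M)"
      by (rule Bochner_Integration.integral_add[OF i2 i3])
    also have "\<dots> < e" using g(3)[OF M] i[OF M] by simp
    finally show "(\<integral>x. \<bar>g x - u x\<bar> \<partial>M) < e" .
  qed
qed

lemma approx_nonneg:
  fixes Ms :: "'a::polish_space measure set"
  assumes Ms: "finite Ms" "\<And>M. M \<in> Ms \<Longrightarrow> finite_measure M \<and> sets M = sets borel"
    and h: "h \<in> borel_measurable borel" "\<And>x. 0 \<le> h x"
  shows "bounded (range h) \<longrightarrow> approxc Ms h"
  using h
proof (induction h rule: borel_measurable_induct_real)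
  case (set A)
  then show ?case using approx_ind[OF Ms, of A] by simp
next
  case (mult u c)
  show ?case
  proof
    assume b: "bounded (range (\<lambda>x. c * u x))"
    show "approxc Ms (\<lambda>x. c * u x)"
    proof (cases "c = 0")
      case True then show ?thesis using approx_zero[of Ms] by simp
    next
      case False
      then have c: "c > 0" using mult.hyps(1) by simp
      obtain B where B: "\<And>x. \<bar>c * u x\<bar> \<le> B" using b unfolding bnd_iff by blast
      have "bounded (range u)" unfolding bnd_iff
      proof (intro exI allI)
        fix x have "c * \<bar>u x\<bar> \<le> B" using B[of x] c by (simp add: abs_mult)
        then show "\<bar>u x\<bar> \<le> B / c" using c by (simp add: field_simps)
      qed
      then show ?thesis using mult.IH c by (intro approx_cmult) auto
    qed
  qed
next
  case (add u v)
  show ?case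
  proof
    assume b: "bounded (range (\<lambda>x. v x + u x))"
    obtain B where B: "\<And>x. \<bar>v x + u x\<bar> \<le> B" using b unfolding bnd_iff by blast
    have bu: "bounded (range u)" unfolding bnd_iff
      by (rule exI[of _ B]) (use B add.hyps in \<open>smt (verit)\<close>)
    have bv: "bounded (range v)" unfolding bnd_iff
      by (rule exI[of _ B]) (use B add.hyps in \<open>smt (verit)\<close>)
    have "approxc Ms (\<lambda>x. v x + 1 * u x)"
      using add.hyps add.IH bu bv Ms(2) by (intro approx_add) auto
    then show "approxc Ms (\<lambda>x. v x + u x)" by simp
  qed
next
  case (seq U)
  show ?case
  proof
    assume b: "bounded (range h)"
    obtain B where B: "\<And>x. \<bar>h x\<bar> \<le> B" using b unfolding bnd_iff by blast
    have le: "U i x \<le> h x" for i x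
    proof -
      have "incseq (\<lambda>i. U i x)" using seq.hyps(3) by (auto simp: incseq_def le_fun_def)
      then show ?thesis using seq.hyps(4)[of x] by (intro incseq_le) auto
    qed
    have bU: "\<bar>U i x\<bar> \<le> B" for i x using le[of i x] B[of x] seq.hyps(2)[of i x] by auto
    have aU: "approxc Ms (U i)" for i
      using seq.IH[of i] bU unfolding bnd_iff by blast
    show "approxc Ms h"
      by (rule approx_seq[OF Ms seq.hyps(1) _ _ bU aU]) (use seq.hyps h(1) in auto)
  qed
qed

lemma density:
  fixes Ms :: "'a::polish_space measure set"
  assumes Ms: "finite Ms" "\<And>M. M \<in> Ms \<Longrightarrow> finite_measure M \<and> sets M = sets borel"
    and h[measurable]: "h \<in> borel_measurable borel" and b: "bounded (range h)"
  shows "approxc Ms h"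
proof -
  obtain B where B: "\<And>x. \<bar>h x\<bar> \<le> B" using b unfolding bnd_iff by blast
  have m1[measurable]: "(\<lambda>x. max (h x) 0) \<in> borel_measurable borel" by measurable
  have m2[measurable]: "(\<lambda>x. max (- h x) 0) \<in> borel_measurable borel" by measurable
  have b1: "bounded (range (\<lambda>x. max (h x) 0))" unfolding bnd_iff
  proof (intro exI allI)
    fix x show "\<bar>max (h x) 0\<bar> \<le> B" using B[of x] by auto
  qed
  have b2: "bounded (range (\<lambda>x. max (- h x) 0))" unfolding bnd_iff
  proof (intro exI allI)
    fix x show "\<bar>max (- h x) 0\<bar> \<le> B" using B[of x] by auto
  qed
  have a1: "approxc Ms (\<lambda>x. max (h x) 0)" using approx_nonneg[OF Ms m1] b1 by simp
  have a2: "approxc Ms (\<lambda>x. max (- h x) 0)" using approx_nonneg[OF Ms m2] b2 by simp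
  have "approxc Ms (\<lambda>x. max (h x) 0 + (-1) * max (- h x) 0)"
    by (rule approx_add[OF Ms(2) m1 m2 b1 b2 a1 a2]) auto
  moreover have "(\<lambda>x. max (h x) 0 + (-1) * max (- h x) 0) = h" by (auto simp: fun_eq_iff max_def)
  ultimately show ?thesis by simp
qed


lemma DB:
  assumes "k \<le> Suc n"
  shows "((\<lambda>t. Bernstein (Suc n) k t) has_real_derivative
          real (Suc n) * ((if k = 0 then 0 else Bernstein n (k - 1) t) - Bernstein n k t)) (at t)"
proof (cases k)
  case 0
  have "((\<lambda>t. (1 - t) ^ Suc n) has_real_derivative real (Suc n) * (1 - t) ^ n * (0 - 1)) (at t)"
    using DERIV_chain2[of "\<lambda>x. x ^ Suc n", OF DERIV_pow[of "Suc n" "1 - t"] DERIV_diff[OF DERIV_const DERIV_ident, of 1 t]]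
    by simp
  then show ?thesis using 0 by (simp add: Bernstein_def)
next
  case (Suc j)
  then have j: "j \<le> n" using assms by simp
  define m where "m = n - j"
  define C where "C = real (Suc n choose Suc j)"
  have b1: "C * real (Suc j) = real (Suc n) * real (n choose j)"
    unfolding C_def using Suc_times_binomial_eq[of n j] by (metis of_nat_mult)
  have b2: "C * real m = real (Suc n) * real (n choose Suc j)"
    unfolding C_def m_def using binomial_absorb_comp[of "Suc n" "Suc j"] by (metis diff_Suc_Suc diff_Suc_1 of_nat_mult mult.commute)
  have e1: "Bernstein (Suc n) k = (\<lambda>t. C * (t ^ Suc j * (1 - t) ^ m))"
    using Suc by (auto simp: Bernstein_def C_def m_def fun_eq_iff)
  have d1: "((\<lambda>t. t ^ Suc j) has_real_derivative real (Suc j) * t ^ j) (at t)"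
    using DERIV_pow[of "Suc j" t] by simp
  have d2: "((\<lambda>t. (1 - t) ^ m) has_real_derivative real m * (1 - t) ^ (m - 1) * (0 - 1)) (at t)"
    using DERIV_chain2[of "\<lambda>x. x ^ m", OF DERIV_pow[of m "1 - t"] DERIV_diff[OF DERIV_const DERIV_ident, of 1 t]]
    by simp
  have d: "((\<lambda>t. C * (t ^ Suc j * (1 - t) ^ m)) has_real_derivative
        C * (real (Suc j) * t ^ j * (1 - t) ^ m + real m * (1 - t) ^ (m - 1) * (0 - 1) * t ^ Suc j)) (at t)"
    by (rule DERIV_cmult[OF DERIV_mult[OF d1 d2]])
  have "C * (real (Suc j) * t ^ j * (1 - t) ^ m + real m * (1 - t) ^ (m - 1) * (0 - 1) * t ^ Suc j)
      = (C * real (Suc j)) * (t ^ j * (1 - t) ^ m) - (C * real m) * (t ^ Suc j * (1 - t) ^ (m - 1))"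
    by (simp add: algebra_simps)
  also have "\<dots> = real (Suc n) * (real (n choose j) * t ^ j * (1 - t) ^ (n - j)
         - real (n choose Suc j) * t ^ Suc j * (1 - t) ^ (n - Suc j))"
    unfolding b1 b2 by (simp add: m_def algebra_simps)
  also have "\<dots> = real (Suc n) * ((if k = 0 then 0 else Bernstein n (k - 1) t) - Bernstein n k t)"
    using Suc by (simp add: Bernstein_def)
  finally show ?thesis using d e1 by simp
qed

lemma bern_deriv:
  fixes c :: "nat \<Rightarrow> real"
  shows "((\<lambda>t. \<Sum>k\<le>Suc n. c k * Bernstein (Suc n) k t) has_real_derivative
          real (Suc n) * (\<Sum>k\<le>n. (c (Suc k) - c k) * Bernstein n k t)) (at t)"
proof -
  have "((\<lambda>t. \<Sum>k\<le>Suc n. c k * Bernstein (Suc n) k t) has_real_derivative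
      (\<Sum>k\<le>Suc n. c k * (real (Suc n) * ((if k = 0 then 0 else Bernstein n (k - 1) t) - Bernstein n k t)))) (at t)"
    by (intro DERIV_sum DERIV_cmult DB) auto
  also have "(\<Sum>k\<le>Suc n. c k * (real (Suc n) * ((if k = 0 then 0 else Bernstein n (k - 1) t) - Bernstein n k t)))
      = real (Suc n) * ((\<Sum>k\<le>Suc n. c k * (if k = 0 then 0 else Bernstein n (k - 1) t)) - (\<Sum>k\<le>Suc n. c k * Bernstein n k t))"
    by (simp add: sum_distrib_left sum_subtractf algebra_simps)
  also have "(\<Sum>k\<le>Suc n. c k * (if k = 0 then 0 else Bernstein n (k - 1) t)) = (\<Sum>k\<le>n. c (Suc k) * Bernstein n k t)"
    by (subst sum.atMost_Suc_shift) simp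
  also have "(\<Sum>k\<le>Suc n. c k * Bernstein n k t) = (\<Sum>k\<le>n. c k * Bernstein n k t)"
    by (simp add: Bernstein_def)
  also have "(\<Sum>k\<le>n. c (Suc k) * Bernstein n k t) - (\<Sum>k\<le>n. c k * Bernstein n k t) = (\<Sum>k\<le>n. (c (Suc k) - c k) * Bernstein n k t)"
    by (simp add: sum_subtractf algebra_simps)
  finally show ?thesis .
qed

lemma sum_sq_bern:
  assumes "N > 0"
  shows "(\<Sum>k\<le>N. (real k / N - t)\<^sup>2 * Bernstein N k t) = t * (1 - t) / N"
proof -
  have pt: "(real k / N - t)\<^sup>2 * Bernstein N k t = (real k * (real k - 1) * Bernstein N k t) / N^2
      + (real k * Bernstein N k t) / N^2 - (2 * t / N) * (real k * Bernstein N k t) + t^2 * Bernstein N k t" for k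
    using assms by (simp add: power2_eq_square field_simps)
  have "(\<Sum>k\<le>N. (real k / N - t)\<^sup>2 * Bernstein N k t)
      = (\<Sum>k\<le>N. real k * (real k - 1) * Bernstein N k t) / N^2 + (\<Sum>k\<le>N. real k * Bernstein N k t) / N^2
        - (2 * t / N) * (\<Sum>k\<le>N. real k * Bernstein N k t) + t^2 * (\<Sum>k\<le>N. Bernstein N k t)"
    unfolding pt by (simp only: sum.distrib sum_subtractf sum_divide_distrib[symmetric] sum_distrib_left[symmetric])
  also have "\<dots> = real N * (real N - 1) * t\<^sup>2 / N^2 + real N * t / N^2 - (2 * t / N) * (real N * t) + t^2"
    by (simp only: sum_kk_Bernstein sum_k_Bernstein sum_Bernstein mult_1_right)
  also have "\<dots> = t * (1 - t) / N"
    using assms by (simp add: power2_eq_square field_simps)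
  finally show ?thesis .
qed


lemma bern_bound:
  assumes t: "0 \<le> t" "t \<le> 1" and a: "\<And>k. k \<le> N \<Longrightarrow> \<bar>a k\<bar> \<le> S"
  shows "\<bar>\<Sum>k\<le>N. a k * Bernstein N k t\<bar> \<le> S"
proof -
  have "\<bar>\<Sum>k\<le>N. a k * Bernstein N k t\<bar> \<le> (\<Sum>k\<le>N. \<bar>a k * Bernstein N k t\<bar>)" by (rule sum_abs)
  also have "\<dots> \<le> (\<Sum>k\<le>N. S * Bernstein N k t)"
  proof (rule sum_mono)
    fix k assume "k \<in> {..N}"
    then show "\<bar>a k * Bernstein N k t\<bar> \<le> S * Bernstein N k t"
      using a[of k] Bernstein_nonneg[OF t, of N k] by (simp add: abs_mult mult_right_mono)
  qed
  also have "\<dots> = S" by (simp add: sum_distrib_left[symmetric])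
  finally show ?thesis .
qed

lemma bern_err:
  assumes N: "N > 0" and t: "0 \<le> t" "t \<le> 1" and d: "\<delta> > 0" "real N * \<delta>\<^sup>2 \<ge> 1" and l: "L \<ge> 0"
    and a: "\<And>k. k \<le> N \<Longrightarrow> \<bar>a k - v\<bar> \<le> E + L * \<bar>real k / N - t\<bar>"
  shows "\<bar>(\<Sum>k\<le>N. a k * Bernstein N k t) - v\<bar> \<le> E + 2 * L * \<delta>"
proof -
  have B0: "\<And>k. 0 \<le> Bernstein N k t" using Bernstein_nonneg[OF t] by blast
  have "(\<Sum>k\<le>N. a k * Bernstein N k t) - v = (\<Sum>k\<le>N. (a k - v) * Bernstein N k t)"
    by (simp add: sum_subtractf left_diff_distrib sum_distrib_left[symmetric])
  then have "\<bar>(\<Sum>k\<le>N. a k * Bernstein N k t) - v\<bar> \<le> (\<Sum>k\<le>N. \<bar>(a k - v) * Bernstein N k t\<bar>)"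
    by (simp add: sum_abs)
  also have "\<dots> \<le> (\<Sum>k\<le>N. (E + L * \<delta> + (L / \<delta>) * (real k / N - t)\<^sup>2) * Bernstein N k t)"
  proof (rule sum_mono)
    fix k assume k: "k \<in> {..N}"
    have q: "\<bar>y\<bar> \<le> \<delta> + y\<^sup>2 / \<delta>" for y :: real
    proof (cases "\<bar>y\<bar> \<le> \<delta>")
      case True then show ?thesis using d by (simp add: add_increasing2)
    next
      case False
      then have "\<delta> * \<bar>y\<bar> \<le> \<bar>y\<bar> * \<bar>y\<bar>" by (intro mult_right_mono) auto
      then have "\<bar>y\<bar> \<le> y\<^sup>2 / \<delta>" using d by (simp add: field_simps power2_eq_square)
      then show ?thesis using d by simp
    qed
    have "\<bar>a k - v\<bar> \<le> E + L * (\<delta> + (real k / N - t)\<^sup>2 / \<delta>)"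
      using a[of k] k q[of "real k / N - t"] l by (smt (verit, best) atMost_iff mult_left_mono)
    then have "\<bar>a k - v\<bar> \<le> E + L * \<delta> + (L / \<delta>) * (real k / N - t)\<^sup>2"
      by (simp add: algebra_simps)
    then show "\<bar>(a k - v) * Bernstein N k t\<bar> \<le> (E + L * \<delta> + (L / \<delta>) * (real k / N - t)\<^sup>2) * Bernstein N k t"
      using B0[of k] by (simp add: abs_mult mult_right_mono)
  qed
  also have "\<dots> = (\<Sum>k\<le>N. (E + L * \<delta>) * Bernstein N k t) + (\<Sum>k\<le>N. (L / \<delta>) * ((real k / N - t)\<^sup>2 * Bernstein N k t))"
    by (simp only: distrib_right sum.distrib mult.assoc)
  also have "\<dots> = (E + L * \<delta>) * (\<Sum>k\<le>N. Bernstein N k t) + (L / \<delta>) * (\<Sum>k\<le>N. (real k / N - t)\<^sup>2 * Bernstein N k t)"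
    by (simp only: sum_distrib_left)
  also have "\<dots> = E + L * \<delta> + (L / \<delta>) * (t * (1 - t) / N)"
    by (simp only: sum_sq_bern[OF N] sum_Bernstein mult_1_right)
  also have "\<dots> \<le> E + 2 * L * \<delta>"
  proof -
    have "t * (1 - t) \<le> 1" using t by (smt (verit) mult_le_one)
    then have "t * (1 - t) / N \<le> 1 / N" using N by (simp add: divide_right_mono)
    also have "1 / N \<le> \<delta>\<^sup>2" using d N by (simp add: field_simps)
    finally have "(L / \<delta>) * (t * (1 - t) / N) \<le> (L / \<delta>) * \<delta>\<^sup>2"
      using l d by (intro mult_left_mono) auto
    also have "\<dots> = L * \<delta>" using d by (simp add: power2_eq_square)
    finally show ?thesis by simp
  qed
  finally show ?thesis .
qed

lemma bern_cont: "continuous_on A f \<Longrightarrow> continuous_on A (\<lambda>x. Bernstein N k (f x))"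
  unfolding Bernstein_def by (intro continuous_intros)


fun clampseq :: "real \<Rightarrow> real \<Rightarrow> (nat \<Rightarrow> real) \<Rightarrow> nat \<Rightarrow> real" where
  "clampseq S d c 0 = max (- S) (min S (c 0))"
| "clampseq S d c (Suc k) = max (max (- S) (clampseq S d c k - d)) (min (min S (clampseq S d c k + d)) (c (Suc k)))"

lemma clampseq_bound:
  assumes "S \<ge> 0" "d \<ge> 0"
  shows "\<bar>clampseq S d c k\<bar> \<le> S"
  by (induction k) (use assms in auto)

lemma clampseq_step:
  assumes "S \<ge> 0" "d \<ge> 0"
  shows "\<bar>clampseq S d c (Suc k) - clampseq S d c k\<bar> \<le> d"
  using clampseq_bound[OF assms, of c k] assms by auto

lemma clampseq_err:
  assumes "S \<ge> 0" "d \<ge> 0" and hb: "\<And>j. \<bar>h j\<bar> \<le> S" and hs: "\<And>j. \<bar>h (Suc j) - h j\<bar> \<le> d"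
  shows "\<bar>clampseq S d c k - h k\<bar> \<le> (\<Sum>j\<le>k. \<bar>c j - h j\<bar>)"
proof (induction k)
  case 0
  then show ?case using hb[of 0] by auto
next
  case (Suc k)
  define a where "a = clampseq S d c k"
  have ab: "\<bar>a\<bar> \<le> S" unfolding a_def by (rule clampseq_bound[OF assms(1,2)])
  have IH: "\<bar>a - h k\<bar> \<le> (\<Sum>j\<le>k. \<bar>c j - h j\<bar>)" using Suc unfolding a_def .
  have "\<bar>clampseq S d c (Suc k) - h (Suc k)\<bar> \<le> \<bar>a - h k\<bar> + \<bar>c (Suc k) - h (Suc k)\<bar>"
    using hb[of k] hb[of "Suc k"] hs[of k] ab assms(1,2) unfolding clampseq.simps a_def[symmetric]
    by (simp add: max_def min_def abs_if split: if_splits) linarith?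
  then show ?case using IH by simp
qed

lemma clampseq_cont:
  assumes "\<And>j. continuous_on A (\<lambda>x. c j x)"
  shows "continuous_on A (\<lambda>x. clampseq S d (\<lambda>j. c j x) k)"
  by (induction k) (auto intro!: continuous_intros assms)


definition projG :: "(int^'d::finite) set \<Rightarrow> 'd config \<Rightarrow> 'd config" where
  "projG G x = (\<lambda>q. if q \<in> G then x q else 0)"

definition clip :: "('d::finite) config \<Rightarrow> 'd config" where
  "clip z = (\<lambda>q. max 0 (min 1 (z q)))"

lemma Omega_compact: "compact (Omega :: ('d::finite) config set)"
proof -
  have e: "Omega = PiE UNIV (\<lambda>_::int^'d. {0..1::real})"
    by (auto simp: Omega_def PiE_def Pi_def extensional_def)
  have "compactin (product_topology (\<lambda>_. euclidean) UNIV) (PiE UNIV (\<lambda>_::int^'d. {0..1::real}))"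
    by (subst compactin_PiE) auto
  then show ?thesis unfolding e euclidean_product_topology by simp
qed

lemma Omega_I: "(\<And>q. 0 \<le> x q \<and> x q \<le> 1) \<Longrightarrow> x \<in> Omega"
  by (auto simp: Omega_def)

lemma Omega_D: "x \<in> Omega \<Longrightarrow> 0 \<le> x q \<and> x q \<le> 1"
  by (auto simp: Omega_def)

lemma Omega_upd: "x \<in> Omega \<Longrightarrow> t \<in> {0..1} \<Longrightarrow> x(p := t) \<in> Omega"
  by (auto simp: Omega_def)

lemma projG_Omega: "x \<in> Omega \<Longrightarrow> projG G x \<in> Omega"
  by (auto simp: Omega_def projG_def)

lemma clip_Omega: "clip z \<in> Omega"
  by (auto simp: Omega_def clip_def)

lemma clip_id: "x \<in> Omega \<Longrightarrow> clip x = x"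
  by (auto simp: Omega_def clip_def fun_eq_iff)

lemma cont_coord: "continuous_on A (\<lambda>x::('d::finite) config. x q)"
  by (rule continuous_on_subset[OF continuous_on_product_coordinates]) auto

lemma projG_cont: "continuous_on A (projG G :: ('d::finite) config \<Rightarrow> _)"
  unfolding projG_def
proof (rule continuous_on_coordinatewise_then_product)
  fix q show "continuous_on A (\<lambda>x::'d config. if q \<in> G then x q else 0)"
    by (cases "q \<in> G") (auto intro: cont_coord)
qed

lemma clipupd_cont: "continuous_on A (\<lambda>z::('d::finite) config. (clip z)(p := t))"
proof (rule continuous_on_coordinatewise_then_product)
  fix q show "continuous_on A (\<lambda>z::'d config. ((clip z)(p := t)) q)"
    by (cases "q = p") (auto simp: clip_def intro!: continuous_intros cont_coord)
qed

lemma Omega_sets: "Omega \<in> sets (borel :: ('d::finite) config measure)"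
proof -
  have "closed (Omega :: 'd config set)" using Omega_compact by (rule compact_imp_closed)
  then show ?thesis by (rule borel_closed)
qed

lemma space_OmegaB: "space OmegaB = Omega"
  by (simp add: OmegaB_def space_restrict_space)

lemma cont_meas_OmegaB:
  assumes "continuous_on Omega f"
  shows "(f :: ('d::finite) config \<Rightarrow> 'b::topological_space) \<in> borel_measurable OmegaB"
  unfolding OmegaB_def using assms Omega_sets by (intro borel_measurable_continuous_on_restrict) auto

lemma meas_into_OmegaB:
  assumes "continuous_on UNIV g" "\<And>z. g z \<in> Omega"
  shows "g \<in> measurable borel (OmegaB :: ('d::finite) config measure)"
  unfolding OmegaB_def
  by (rule measurable_restrict_space2) (use assms in \<open>auto intro: borel_measurable_continuous_onI\<close>)

lemma meas_from_OmegaB: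
  assumes "continuous_on UNIV g"
  shows "(g :: ('d::finite) config \<Rightarrow> 'b::topological_space) \<in> measurable OmegaB borel"
  unfolding OmegaB_def
  by (rule measurable_restrict_space1) (use assms in \<open>auto intro: borel_measurable_continuous_onI\<close>)


lemma approx_u:
  fixes u :: "('d::finite) config \<Rightarrow> real" and ms :: "'d config measure set" and p :: "int^'d"
  assumes F: "finite F" and dep: "\<And>x y. x \<in> Omega \<Longrightarrow> y \<in> Omega \<Longrightarrow> (\<forall>q\<in>F. x q = y q) \<Longrightarrow> u x = u y"
    and um[measurable]: "u \<in> borel_measurable OmegaB"
    and Sb: "\<And>x. x \<in> Omega \<Longrightarrow> \<bar>u x\<bar> \<le> S"
    and Lip: "\<And>x t t'. x \<in> Omega \<Longrightarrow> t \<in> {0..1} \<Longrightarrow> t' \<in> {0..1} \<Longrightarrow> u (x(p:=t)) - u (x(p:=t')) \<le> L * \<bar>t - t'\<bar>"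
    and L: "L \<ge> 0"
    and ms: "finite ms" "\<And>m. m \<in> ms \<Longrightarrow> finite_measure m \<and> sets m = sets OmegaB"
    and e: "e > 0"
  shows "\<exists>w w'. continuous_on Omega w \<and> depends_finitely w \<and> (\<forall>x\<in>Omega. \<bar>w x\<bar> \<le> S) \<and>
          continuous_on Omega w' \<and> (\<forall>x\<in>Omega. \<bar>w' x\<bar> \<le> L) \<and>
          (\<forall>x\<in>Omega. ((\<lambda>s. w (x(p := s))) has_real_derivative w' x) (at (x p))) \<and>
          (\<forall>m\<in>ms. (\<integral>x. \<bar>w x - u x\<bar> \<partial>m) < e)"
proof -
  define x0 :: "'d config" where "x0 = (\<lambda>_. 0)"
  have x0: "x0 \<in> Omega" by (auto simp: x0_def Omega_def)
  have S: "S \<ge> 0" using Sb[OF x0] by simp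
  define G where "G = F - {p}"
  define \<pi> where "\<pi> = projG G"
  have \<pi>c: "continuous_on UNIV \<pi>" unfolding \<pi>_def by (rule projG_cont)
  have \<pi>m[measurable]: "\<pi> \<in> measurable OmegaB borel" using \<pi>c by (rule meas_from_OmegaB)
  have \<pi>upd: "\<pi> (x(p := s)) = \<pi> x" for x s unfolding \<pi>_def projG_def G_def by auto
  define Q where "Q = (\<Sum>m\<in>ms. measure m (space m))"
  have Q0: "Q \<ge> 0" unfolding Q_def by (simp add: sum_nonneg)
  define \<delta> where "\<delta> = e / (4 * (L * Q + 1))"
  have LQ: "L * Q \<ge> 0" using L Q0 by simp
  have \<delta>0: "\<delta> > 0" unfolding \<delta>_def using e LQ by simp
  obtain N :: nat where N: "1 / \<delta>\<^sup>2 < real N" using reals_Archimedean2 by blast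
  have N0: "N > 0" using N \<delta>0 by (metis of_nat_0_less_iff order_less_trans zero_less_divide_1_iff zero_less_power)
  have N\<delta>: "real N * \<delta>\<^sup>2 \<ge> 1" using N \<delta>0 by (simp add: field_simps)
  define \<epsilon> where "\<epsilon> = e / (4 * (real N + 1))"
  have \<epsilon>0: "\<epsilon> > 0" unfolding \<epsilon>_def using e by simp
  define tN where "tN j = min 1 (real j / real N)" for j
  have tN: "tN j \<in> {0..1}" for j unfolding tN_def by auto
  have tNk: "k \<le> N \<Longrightarrow> tN k = real k / real N" for k unfolding tN_def using N0 by auto
  define H where "H j z = u ((clip z)(p := tN j))" for j z
  have Hm[measurable]: "H j \<in> borel_measurable borel" for j
  proof -
    have "(\<lambda>z. (clip z)(p := tN j)) \<in> measurable borel OmegaB"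
      by (rule meas_into_OmegaB[OF clipupd_cont]) (use clip_Omega Omega_upd tN in blast)
    then show ?thesis unfolding H_def by measurable
  qed
  have Hb: "\<bar>H j z\<bar> \<le> S" for j z unfolding H_def using Sb Omega_upd[OF clip_Omega tN] by blast
  have Hbnd: "bounded (range (H j))" for j using Hb unfolding bnd_iff by blast
  define ms' where "ms' = (\<lambda>m. distr m borel \<pi>) ` ms"
  have ms'1: "finite ms'" unfolding ms'_def using ms(1) by simp
  have ms'2: "finite_measure M \<and> sets M = sets borel" if M: "M \<in> ms'" for M
  proof -
    obtain m where m: "m \<in> ms" "M = distr m borel \<pi>" using M unfolding ms'_def by blast
    have fm: "finite_measure m" and sm: "sets m = sets OmegaB" using ms(2)[OF m(1)] by auto
    have "\<pi> \<in> measurable m borel" unfolding measurable_cong_sets[OF sm refl] by (rule \<pi>m)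
    then show ?thesis using m fm by (auto intro: finite_measure.finite_measure_distr)
  qed
  have "\<forall>j. \<exists>g. continuous_on UNIV g \<and> bounded (range g) \<and> (\<forall>M\<in>ms'. (\<integral>x. \<bar>g x - H j x\<bar> \<partial>M) < \<epsilon>)"
  proof
    fix j show "\<exists>g. continuous_on UNIV g \<and> bounded (range g) \<and> (\<forall>M\<in>ms'. (\<integral>x. \<bar>g x - H j x\<bar> \<partial>M) < \<epsilon>)"
      using density[OF ms'1 ms'2 Hm Hbnd] \<epsilon>0 unfolding approxc_def by blast
  qed
  then obtain g where g: "\<And>j. continuous_on UNIV (g j)" "\<And>j. bounded (range (g j))"
      "\<And>j M. M \<in> ms' \<Longrightarrow> (\<integral>x. \<bar>g j x - H j x\<bar> \<partial>M) < \<epsilon>"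
    by metis
  have gm[measurable]: "g j \<in> borel_measurable borel" for j using g(1) by (rule cont_borel)
  obtain Bg where Bg: "\<And>j x. j \<le> N \<Longrightarrow> \<bar>g j x\<bar> \<le> Bg"
  proof -
    have "\<forall>j. \<exists>B. \<forall>x. \<bar>g j x\<bar> \<le> B" using g(2) unfolding bnd_iff by blast
    then obtain B where B: "\<And>j x. \<bar>g j x\<bar> \<le> B j" by metis
    show ?thesis
    proof (rule that[of "\<Sum>j\<le>N. \<bar>B j\<bar>"])
      fix j x assume j: "j \<le> N"
      have "\<bar>g j x\<bar> \<le> \<bar>B j\<bar>" using B[of j x] by simp
      also have "\<dots> \<le> (\<Sum>j\<le>N. \<bar>B j\<bar>)" using j by (intro member_le_sum) auto
      finally show "\<bar>g j x\<bar> \<le> (\<Sum>j\<le>N. \<bar>B j\<bar>)" .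
    qed
  qed
  define c where "c j x = g j (\<pi> x)" for j x
  define cs where "cs k x = clampseq S (L / N) (\<lambda>j. c j x) k" for k x
  obtain n where n: "N = Suc n" using N0 gr0_implies_Suc by blast
  define w where "w x = (\<Sum>k\<le>N. cs k x * Bernstein N k (x p))" for x
  define w' where "w' x = real N * (\<Sum>k\<le>n. (cs (Suc k) x - cs k x) * Bernstein n k (x p))" for x
  have cc: "continuous_on A (c j)" for A j
    unfolding c_def by (rule continuous_on_compose2[OF g(1) projG_cont[of A G, folded \<pi>_def]]) auto
  have csc: "continuous_on A (cs k)" for A k
    unfolding cs_def by (rule clampseq_cont) (rule cc)
  have wc: "continuous_on Omega w"
    unfolding w_def by (intro continuous_intros bern_cont csc cont_coord)
  have w'c: "continuous_on Omega w'"
    unfolding w'_def by (intro continuous_intros bern_cont csc cont_coord)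
  have csupd: "cs k (x(p := s)) = cs k x" for k x s
    unfolding cs_def c_def \<pi>upd ..
  have LN: "L / N \<ge> 0" using L by simp
  have csb: "\<bar>cs k x\<bar> \<le> S" for k x unfolding cs_def by (rule clampseq_bound[OF S LN])
  have css: "\<bar>cs (Suc k) x - cs k x\<bar> \<le> L / N" for k x unfolding cs_def by (rule clampseq_step[OF S LN])
  have tx: "0 \<le> x p" "x p \<le> 1" if "x \<in> Omega" for x using Omega_D[OF that] by auto
  have wb: "\<forall>x\<in>Omega. \<bar>w x\<bar> \<le> S"
    unfolding w_def
  proof
    fix x :: "'d config" assume x: "x \<in> Omega"
    show "\<bar>\<Sum>k\<le>N. cs k x * Bernstein N k (x p)\<bar> \<le> S"
      by (rule bern_bound[OF tx[OF x]]) (rule csb)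
  qed
  have w'b: "\<forall>x\<in>Omega. \<bar>w' x\<bar> \<le> L"
  proof
    fix x :: "'d config" assume x: "x \<in> Omega"
    have "\<bar>\<Sum>k\<le>n. (cs (Suc k) x - cs k x) * Bernstein n k (x p)\<bar> \<le> L / N"
      by (rule bern_bound[OF tx[OF x]]) (rule css)
    then have "real N * \<bar>\<Sum>k\<le>n. (cs (Suc k) x - cs k x) * Bernstein n k (x p)\<bar> \<le> real N * (L / N)"
      by (intro mult_left_mono) auto
    then show "\<bar>w' x\<bar> \<le> L" unfolding w'_def using N0 by (simp add: abs_mult)
  qed
  have wd: "\<forall>x\<in>Omega. ((\<lambda>s. w (x(p := s))) has_real_derivative w' x) (at (x p))"
  proof
    fix x :: "'d config" assume x: "x \<in> Omega"
    have e1: "(\<lambda>s. w (x(p := s))) = (\<lambda>s. \<Sum>k\<le>Suc n. cs k x * Bernstein (Suc n) k s)"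
      unfolding w_def csupd n by simp
    show "((\<lambda>s. w (x(p := s))) has_real_derivative w' x) (at (x p))"
      unfolding e1 w'_def n by (rule bern_deriv)
  qed
  have wdep: "depends_finitely w"
    unfolding depends_finitely_def
  proof (intro exI conjI ballI impI)
    show "finite (insert p F)" using F by simp
    fix x y :: "'d config" assume x: "x \<in> Omega" and y: "y \<in> Omega" and xy: "\<forall>q\<in>insert p F. x q = y q"
    have "\<pi> x = \<pi> y" using xy unfolding \<pi>_def projG_def G_def by auto
    then have "cs k x = cs k y" for k unfolding cs_def c_def by simp
    moreover have "x p = y p" using xy by simp
    ultimately show "w x = w y" unfolding w_def by simp
  qed
  have hx: "H j (\<pi> x) = u (x(p := tN j))" if x: "x \<in> Omega" for x j
  proof -
    have \<pi>x: "\<pi> x \<in> Omega" unfolding \<pi>_def using x by (rule projG_Omega)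
    have "H j (\<pi> x) = u ((\<pi> x)(p := tN j))" unfolding H_def clip_id[OF \<pi>x] ..
    also have "\<dots> = u (x(p := tN j))"
    proof (rule dep[OF Omega_upd[OF \<pi>x tN] Omega_upd[OF x tN]], rule ballI)
      fix q assume q: "q \<in> F"
      show "((\<pi> x)(p := tN j)) q = (x(p := tN j)) q"
        using q unfolding \<pi>_def projG_def G_def by auto
    qed
    finally show ?thesis .
  qed
  have pw: "\<bar>w x - u x\<bar> \<le> (\<Sum>j\<le>N. \<bar>g j (\<pi> x) - H j (\<pi> x)\<bar>) + 2 * L * \<delta>" if x: "x \<in> Omega" for x
  proof -
    define h where "h j = u (x(p := tN j))" for j
    have hb: "\<bar>h j\<bar> \<le> S" for j unfolding h_def by (rule Sb[OF Omega_upd[OF x tN]])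
    have tNs: "\<bar>tN (Suc j) - tN j\<bar> \<le> 1 / N" for j
    proof -
      have "\<bar>real (Suc j) / N - real j / N\<bar> = 1 / N" using N0 by (simp add: field_simps)
      then show ?thesis unfolding tN_def by linarith
    qed
    have hs: "\<bar>h (Suc j) - h j\<bar> \<le> L / N" for j
    proof -
      have a1: "h (Suc j) - h j \<le> L * \<bar>tN (Suc j) - tN j\<bar>" unfolding h_def by (rule Lip[OF x tN tN])
      have a2: "h j - h (Suc j) \<le> L * \<bar>tN j - tN (Suc j)\<bar>" unfolding h_def by (rule Lip[OF x tN tN])
      have "L * \<bar>tN (Suc j) - tN j\<bar> \<le> L * (1 / N)" using L tNs[of j] by (rule mult_left_mono[rotated])
      then show ?thesis using a1 a2 by (simp add: abs_minus_commute)
    qed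
    define E where "E = (\<Sum>j\<le>N. \<bar>c j x - h j\<bar>)"
    have Eeq: "E = (\<Sum>j\<le>N. \<bar>g j (\<pi> x) - H j (\<pi> x)\<bar>)"
      unfolding E_def c_def h_def hx[OF x] ..
    have ak: "\<bar>cs k x - u x\<bar> \<le> E + L * \<bar>real k / N - x p\<bar>" if k: "k \<le> N" for k
    proof -
      have "\<bar>cs k x - h k\<bar> \<le> (\<Sum>j\<le>k. \<bar>c j x - h j\<bar>)"
        unfolding cs_def by (rule clampseq_err[where h=h, OF S LN hb hs])
      also have "\<dots> \<le> E" unfolding E_def using k by (intro sum_mono2) auto
      finally have 1: "\<bar>cs k x - h k\<bar> \<le> E" .
      have ux: "u x = u (x(p := x p))" by simp
      have txx: "x p \<in> {0..1}" using tx[OF x] by simp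
      have b1: "h k - u x \<le> L * \<bar>tN k - x p\<bar>" unfolding h_def by (subst ux) (rule Lip[OF x tN txx])
      have b2: "u x - h k \<le> L * \<bar>x p - tN k\<bar>" unfolding h_def by (subst ux) (rule Lip[OF x txx tN])
      have 2: "\<bar>h k - u x\<bar> \<le> L * \<bar>real k / N - x p\<bar>" using b1 b2 tNk[OF k] by (simp add: abs_minus_commute)
      show ?thesis using 1 2 by linarith
    qed
    have "\<bar>w x - u x\<bar> \<le> E + 2 * L * \<delta>"
      unfolding w_def using tx[OF x] by (intro bern_err[OF N0 _ _ \<delta>0 N\<delta> L] ak) auto
    then show ?thesis unfolding Eeq .
  qed
  have wm[measurable]: "w \<in> borel_measurable OmegaB" using wc by (rule cont_meas_OmegaB)
  have err: "(\<integral>x. \<bar>w x - u x\<bar> \<partial>m) < e" if m: "m \<in> ms" for m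
  proof -
    have fm: "finite_measure m" and sm: "sets m = sets OmegaB" using ms(2)[OF m] by auto
    have spm: "space m = Omega" using sets_eq_imp_space_eq[OF sm] space_OmegaB by simp
    have intO: "integrable m f" if f: "f \<in> borel_measurable OmegaB" and fb: "\<And>x. x \<in> Omega \<Longrightarrow> \<bar>f x\<bar> \<le> B" for f :: "_ \<Rightarrow> real" and B
    proof (rule finite_measure.integrable_const_bound[OF fm, where B=B])
      show "AE x in m. norm (f x) \<le> B" using fb spm by (intro AE_I2) auto
      show "f \<in> borel_measurable m" unfolding measurable_cong_sets[OF sm refl] by (rule f)
    qed
    have \<pi>m': "\<pi> \<in> measurable m borel" unfolding measurable_cong_sets[OF sm refl] by (rule \<pi>m)
    define Ej where "Ej j x = \<bar>g j (\<pi> x) - H j (\<pi> x)\<bar>" for j x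
    have Ejm: "Ej j \<in> borel_measurable OmegaB" for j unfolding Ej_def by measurable
    have iE: "integrable m (Ej j)" if j: "j \<le> N" for j
    proof (rule intO[OF Ejm, where B="Bg + S"])
      fix x :: "'d config"
      have "\<bar>g j (\<pi> x)\<bar> \<le> Bg" by (rule Bg[OF j])
      moreover have "\<bar>H j (\<pi> x)\<bar> \<le> S" by (rule Hb)
      ultimately show "\<bar>Ej j x\<bar> \<le> Bg + S" unfolding Ej_def by linarith
    qed
    have i1: "integrable m (\<lambda>x. \<bar>w x - u x\<bar>)"
    proof (rule intO[where B="S + S"])
      show "(\<lambda>x. \<bar>w x - u x\<bar>) \<in> borel_measurable OmegaB" by measurable
      fix x :: "'d config" assume x: "x \<in> Omega"
      have "\<bar>w x\<bar> \<le> S" using wb x by blast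
      moreover have "\<bar>u x\<bar> \<le> S" by (rule Sb[OF x])
      ultimately show "\<bar>\<bar>w x - u x\<bar>\<bar> \<le> S + S" by linarith
    qed
    have iS: "integrable m (\<lambda>x. \<Sum>j\<le>N. Ej j x)" using iE by (intro Bochner_Integration.integrable_sum) auto
    have iC: "integrable m (\<lambda>x. 2 * L * \<delta>)" using fm by (rule finite_measure.integrable_const)
    have "(\<integral>x. \<bar>w x - u x\<bar> \<partial>m) \<le> (\<integral>x. (\<Sum>j\<le>N. Ej j x) + 2 * L * \<delta> \<partial>m)"
    proof (rule integral_mono_AE[OF i1 Bochner_Integration.integrable_add[OF iS iC]])
      show "AE x in m. \<bar>w x - u x\<bar> \<le> (\<Sum>j\<le>N. Ej j x) + 2 * L * \<delta>"
        using pw spm by (intro AE_I2) (auto simp: Ej_def)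
    qed
    also have "\<dots> = (\<Sum>j\<le>N. (\<integral>x. Ej j x \<partial>m)) + measure m (space m) * (2 * L * \<delta>)"
      using iE by (simp add: Bochner_Integration.integral_add[OF iS iC] Bochner_Integration.integral_sum)
    also have "\<dots> < e"
    proof -
      have "(\<integral>x. Ej j x \<partial>m) < \<epsilon>" if j: "j \<le> N" for j
      proof -
        have "distr m borel \<pi> \<in> ms'" unfolding ms'_def using m by simp
        then have "(\<integral>z. \<bar>g j z - H j z\<bar> \<partial>(distr m borel \<pi>)) < \<epsilon>" by (rule g(3))
        moreover have "(\<integral>z. \<bar>g j z - H j z\<bar> \<partial>(distr m borel \<pi>)) = (\<integral>x. Ej j x \<partial>m)"
          unfolding Ej_def by (rule integral_distr[OF \<pi>m']) measurable
        ultimately show ?thesis by simp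
      qed
      then have s1: "(\<Sum>j\<le>N. (\<integral>x. Ej j x \<partial>m)) < (\<Sum>j\<le>N. \<epsilon>)"
        by (intro sum_strict_mono) auto
      have s2: "(\<Sum>j\<le>N. \<epsilon>) = e / 4" unfolding \<epsilon>_def by (simp add: field_simps add_pos_pos)
      have mQ: "measure m (space m) \<le> Q" unfolding Q_def using m ms(1) by (intro member_le_sum) auto
      have "measure m (space m) * (2 * L * \<delta>) \<le> Q * (2 * L * \<delta>)"
        using mQ L \<delta>0 by (intro mult_right_mono) auto
      also have "\<dots> = e / 2 * (L * Q / (L * Q + 1))" unfolding \<delta>_def using LQ by (simp add: field_simps)
      also have "\<dots> \<le> e / 2 * 1" using e LQ by (intro mult_left_mono) auto
      finally have s3: "measure m (space m) * (2 * L * \<delta>) \<le> e / 2" by simp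
      show ?thesis using s1 s2 s3 e by linarith
    qed
    finally show ?thesis .
  qed
  show ?thesis
    by (rule exI[of _ w], rule exI[of _ w']) (use wc wdep wb w'c w'b wd err in blast)
qed


lemma cborelD:
  assumes "is_cborel (m1, m2, m3, m4)"
  shows "finite_measure m1" "sets m1 = sets OmegaB" "finite_measure m2" "sets m2 = sets OmegaB"
        "finite_measure m3" "sets m3 = sets OmegaB" "finite_measure m4" "sets m4 = sets OmegaB"
  using assms by (auto simp: is_cborel_def)

lemma space_m: "sets m = sets OmegaB \<Longrightarrow> space m = Omega"
  using sets_eq_imp_space_eq space_OmegaB by metis

lemma intc:
  assumes fm: "finite_measure m" and sm: "sets m = sets OmegaB"
    and f: "f \<in> borel_measurable OmegaB" and fb: "\<And>x. x \<in> Omega \<Longrightarrow> norm (f x) \<le> B"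
  shows "integrable m (f :: _ \<Rightarrow> 'b::{banach, second_countable_topology})"
proof (rule finite_measure.integrable_const_bound[OF fm, where B=B])
  show "AE x in m. norm (f x) \<le> B" using fb space_m[OF sm] by (intro AE_I2) auto
  show "f \<in> borel_measurable m" unfolding measurable_cong_sets[OF sm refl] by (rule f)
qed

lemma cint_cong:
  assumes "is_cborel \<mu>" "\<And>x. x \<in> Omega \<Longrightarrow> f x = g x"
  shows "cint \<mu> f = cint \<mu> g"
proof -
  obtain m1 m2 m3 m4 where mu: "\<mu> = (m1, m2, m3, m4)" by (cases \<mu>) auto
  note c = cborelD[OF assms(1)[unfolded mu]]
  have "integral\<^sup>L mi f = integral\<^sup>L mi g" if "sets mi = sets OmegaB" for mi
    using assms(2) space_m[OF that] by (intro Bochner_Integration.integral_cong) auto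
  then show ?thesis unfolding mu cint_def using c by simp
qed

definition goodc :: "('d::finite) cmeasure \<Rightarrow> ('d config \<Rightarrow> complex) \<Rightarrow> bool" where
  "goodc \<mu> f \<longleftrightarrow> f \<in> borel_measurable OmegaB \<and> (\<exists>B. \<forall>x\<in>Omega. cmod (f x) \<le> B)"

lemma goodc_int:
  assumes "is_cborel (m1, m2, m3, m4)" "goodc (m1, m2, m3, m4) f"
  shows "integrable m1 f" "integrable m2 f" "integrable m3 f" "integrable m4 f"
  using assms cborelD[OF assms(1)] by (auto simp: goodc_def intro: intc)

lemma cint_add:
  assumes "is_cborel \<mu>" "goodc \<mu> f" "goodc \<mu> g"
  shows "cint \<mu> (\<lambda>x. f x + g x) = cint \<mu> f + cint \<mu> g"
proof -
  obtain m1 m2 m3 m4 where mu: "\<mu> = (m1, m2, m3, m4)" by (cases \<mu>) auto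
  note i1 = goodc_int[OF assms(1)[unfolded mu] assms(2)[unfolded mu]]
  note i2 = goodc_int[OF assms(1)[unfolded mu] assms(3)[unfolded mu]]
  show ?thesis unfolding mu cint_def using i1 i2 by (simp add: algebra_simps)
qed

lemma cint_diff:
  assumes "is_cborel \<mu>" "goodc \<mu> f" "goodc \<mu> g"
  shows "cint \<mu> (\<lambda>x. f x - g x) = cint \<mu> f - cint \<mu> g"
proof -
  obtain m1 m2 m3 m4 where mu: "\<mu> = (m1, m2, m3, m4)" by (cases \<mu>) auto
  note i1 = goodc_int[OF assms(1)[unfolded mu] assms(2)[unfolded mu]]
  note i2 = goodc_int[OF assms(1)[unfolded mu] assms(3)[unfolded mu]]
  show ?thesis unfolding mu cint_def using i1 i2 by (simp add: algebra_simps)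
qed

lemma cint_divide:
  "cint \<mu> (\<lambda>x. f x / c) = cint \<mu> f / c"
proof -
  obtain m1 m2 m3 m4 where mu: "\<mu> = (m1, m2, m3, m4)" by (cases \<mu>) auto
  show ?thesis unfolding mu cint_def by (simp add: divide_inverse algebra_simps)
qed

lemma cint_bound:
  "cmod (cint (m1, m2, m3, m4) f) \<le> (\<integral>x. cmod (f x) \<partial>m1) + (\<integral>x. cmod (f x) \<partial>m2) + (\<integral>x. cmod (f x) \<partial>m3) + (\<integral>x. cmod (f x) \<partial>m4)"
proof -
  have "cmod (cint (m1, m2, m3, m4) f) \<le> cmod (integral\<^sup>L m1 f) + cmod (integral\<^sup>L m2 f) + cmod (integral\<^sup>L m3 f) + cmod (integral\<^sup>L m4 f)"
  proof -
    define a where "a = integral\<^sup>L m1 f"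
    define b where "b = integral\<^sup>L m2 f"
    define c where "c = integral\<^sup>L m3 f"
    define d where "d = integral\<^sup>L m4 f"
    have 1: "cmod ((a - b) + \<i> * (c - d)) \<le> cmod (a - b) + cmod (\<i> * (c - d))" by (rule norm_triangle_ineq)
    have 2: "cmod (\<i> * (c - d)) = cmod (c - d)" by (simp add: norm_mult)
    have 3: "cmod (a - b) \<le> cmod a + cmod b" by (rule norm_triangle_ineq4)
    have 4: "cmod (c - d) \<le> cmod c + cmod d" by (rule norm_triangle_ineq4)
    have "cmod ((a - b) + \<i> * (c - d)) \<le> cmod a + cmod b + cmod c + cmod d" using 1 2 3 4 by linarith
    then show ?thesis unfolding cint_def a_def b_def c_def d_def by simp
  qed
  also have "\<dots> \<le> (\<integral>x. cmod (f x) \<partial>m1) + (\<integral>x. cmod (f x) \<partial>m2) + (\<integral>x. cmod (f x) \<partial>m3) + (\<integral>x. cmod (f x) \<partial>m4)"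
    by (intro add_mono integral_norm_bound)
  finally show ?thesis .
qed


lemma vd01:
  assumes "t \<in> {0..1}" "(f has_vector_derivative f') (at t within {0..1::real})"
  shows "vector_derivative f (at t within {0..1}) = f'"
  using vector_derivative_within_cbox[of 0 1 t f f'] assms by (simp add: cbox_interval)

lemma tv_scale:
  assumes mu: "is_cborel \<mu>" and T: "tvnorm \<mu> = ereal \<tau>"
    and f: "f \<in> borel_measurable OmegaB" and fb: "\<And>x. x \<in> Omega \<Longrightarrow> cmod (f x) \<le> K" and K: "K > 0"
  shows "cmod (cint \<mu> f) \<le> K * \<tau>"
proof -
  define g where "g x = f x / complex_of_real K" for x
  have gm: "g \<in> borel_measurable OmegaB" unfolding g_def using f by measurable
  have gb: "\<forall>x\<in>Omega. cmod (g x) \<le> 1" unfolding g_def using fb K by (simp add: norm_divide)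
  have "ereal (cmod (cint \<mu> g)) \<le> tvnorm \<mu>" unfolding tvnorm_def
    by (rule SUP_upper) (use gm gb in blast)
  moreover have "cint \<mu> g = cint \<mu> f / complex_of_real K" unfolding g_def by (rule cint_divide)
  ultimately have "cmod (cint \<mu> f) / K \<le> \<tau>" using T K by (simp add: norm_divide)
  then show ?thesis using K by (simp add: field_simps)
qed

lemma var_scale:
  assumes mu: "is_cborel \<mu>" and VP: "VarP p (cint \<mu>) = ereal v"
    and dep: "depends_finitely \<psi>" and c: "continuous_on Omega \<psi>"
    and d: "\<And>x. x \<in> Omega \<Longrightarrow> ((\<lambda>s. \<psi> (x(p := s))) has_vector_derivative pderiv_at p \<psi> x) (at (x p) within {0..1})"
    and dc: "continuous_on Omega (pderiv_at p \<psi>)" and b: "\<And>x. x \<in> Omega \<Longrightarrow> cmod (\<psi> x) \<le> M" and M: "M > 0"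
  shows "cmod (cint \<mu> (pderiv_at p \<psi>)) \<le> M * v"
proof -
  define \<phi> where "\<phi> x = \<psi> x / complex_of_real M" for x
  have dphi: "((\<lambda>s. \<phi> (x(p := s))) has_vector_derivative pderiv_at p \<psi> x / complex_of_real M) (at (x p) within {0..1})"
    if x: "x \<in> Omega" for x
    unfolding \<phi>_def by (rule has_vector_derivative_divide[OF d[OF x]])
  have pd: "pderiv_at p \<phi> x = pderiv_at p \<psi> x / complex_of_real M" if x: "x \<in> Omega" for x
    unfolding pderiv_at_def[of p \<phi>] by (rule vd01) (use x Omega_D dphi in auto)
  have tf: "test_fun p \<phi>"
    unfolding test_fun_def
  proof (intro conjI ballI)
    show "depends_finitely \<phi>" using dep unfolding depends_finitely_def \<phi>_def by metis
    show "continuous_on Omega \<phi>" unfolding \<phi>_def using M by (intro continuous_intros c) auto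
    fix x :: "'a config" assume x: "x \<in> Omega"
    show "((\<lambda>s. \<phi> (x(p := s))) has_vector_derivative pderiv_at p \<phi> x) (at (x p) within {0..1})"
      using dphi[OF x] pd[OF x] by simp
    show "cmod (\<phi> x) \<le> 1" unfolding \<phi>_def using b[OF x] M by (simp add: norm_divide)
  next
    show "continuous_on Omega (pderiv_at p \<phi>)"
      by (rule continuous_on_cong[OF refl pd, THEN iffD2]) (use M in \<open>auto intro!: continuous_intros dc\<close>)
  qed
  have "ereal (cmod (cint \<mu> (pderiv_at p \<phi>))) \<le> VarP p (cint \<mu>)" unfolding VarP_def
    by (rule SUP_upper) (use tf in simp)
  moreover have "cint \<mu> (pderiv_at p \<phi>) = cint \<mu> (pderiv_at p \<psi>) / complex_of_real M"
  proof -
    have "cint \<mu> (pderiv_at p \<phi>) = cint \<mu> (\<lambda>x. pderiv_at p \<psi> x / complex_of_real M)"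
      by (rule cint_cong[OF mu pd])
    also have "\<dots> = cint \<mu> (pderiv_at p \<psi>) / complex_of_real M" by (rule cint_divide)
    finally show ?thesis .
  qed
  ultimately have "cmod (cint \<mu> (pderiv_at p \<psi>)) / M \<le> v" using VP M by (simp add: norm_divide)
  then show ?thesis using M by (simp add: field_simps)
qed

lemma zero_test: "test_fun p (\<lambda>x. 0)"
proof -
  have pd: "pderiv_at p (\<lambda>x. 0) x = 0" if x: "x \<in> Omega" for x
    unfolding pderiv_at_def by (rule vd01) (use x Omega_D in auto)
  show ?thesis unfolding test_fun_def
  proof (intro conjI ballI)
    show "depends_finitely (\<lambda>x::'a config. 0::complex)" unfolding depends_finitely_def by auto
    show "continuous_on Omega (pderiv_at p (\<lambda>x. 0))"
      by (rule continuous_on_cong[OF refl pd, THEN iffD2]) auto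
    fix x :: "'a config" assume x: "x \<in> Omega"
    show "((\<lambda>s. 0::complex) has_vector_derivative pderiv_at p (\<lambda>x. 0) x) (at (x p) within {0..1})"
      using pd[OF x] by simp
  qed auto
qed

lemma VarP_nonneg: "VarP p L \<ge> 0"
proof -
  have "ereal (cmod (L (pderiv_at p (\<lambda>x. 0)))) \<le> VarP p L" unfolding VarP_def
    by (rule SUP_upper) (use zero_test in simp)
  then show ?thesis by (rule order_trans[rotated]) simp
qed

lemma tv_nonneg: "tvnorm \<mu> \<ge> 0"
proof -
  have "ereal (cmod (cint \<mu> (\<lambda>x. 0))) \<le> tvnorm \<mu>" unfolding tvnorm_def
    by (rule SUP_upper) auto
  then show ?thesis by (rule order_trans[rotated]) simp
qed

lemma tv_finite:
  fixes \<mu> :: "('d::finite) cmeasure"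
  assumes mu: "is_cborel \<mu>"
  shows "tvnorm \<mu> < \<infinity>"
proof -
  obtain m1 m2 m3 m4 where m: "\<mu> = (m1, m2, m3, m4)" by (cases \<mu>) auto
  note c = cborelD[OF mu[unfolded m]]
  define Q where "Q = measure m1 (space m1) + measure m2 (space m2) + measure m3 (space m3) + measure m4 (space m4)"
  have bnd: "(\<integral>x. cmod (\<phi> x) \<partial>mi) \<le> measure mi (space mi)"
    if fm: "finite_measure mi" and sm: "sets mi = sets OmegaB" and pm: "\<phi> \<in> borel_measurable OmegaB"
      and pb: "\<forall>x\<in>Omega. cmod (\<phi> x) \<le> 1" for mi \<phi>
  proof -
    have i1: "integrable mi (\<lambda>x. cmod (\<phi> x))"
      by (rule intc[OF fm sm]) (use pm pb in auto)
    have i2: "integrable mi (\<lambda>x. 1::real)" using fm by (rule finite_measure.integrable_const)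
    have "(\<integral>x. cmod (\<phi> x) \<partial>mi) \<le> (\<integral>x. 1 \<partial>mi)"
      by (rule integral_mono_AE[OF i1 i2]) (use pb space_m[OF sm] in \<open>auto intro: AE_I2\<close>)
    then show ?thesis by simp
  qed
  have "tvnorm \<mu> \<le> ereal Q" unfolding tvnorm_def
  proof (rule SUP_least)
    fix \<phi> :: "'d config \<Rightarrow> complex" assume "\<phi> \<in> {\<phi>. \<phi> \<in> borel_measurable OmegaB \<and> (\<forall>x\<in>Omega. cmod (\<phi> x) \<le> 1)}"
    then have pm: "\<phi> \<in> borel_measurable OmegaB" and pb: "\<forall>x\<in>Omega. cmod (\<phi> x) \<le> 1" by auto
    have "cmod (cint \<mu> \<phi>) \<le> Q"
      unfolding m Q_def using cint_bound[of m1 m2 m3 m4 \<phi>] bnd[OF c(1,2) pm pb] bnd[OF c(3,4) pm pb] bnd[OF c(5,6) pm pb] bnd[OF c(7,8) pm pb]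
      by linarith
    then show "ereal (cmod (cint \<mu> \<phi>)) \<le> ereal Q" by simp
  qed
  then show ?thesis using le_less_trans[of "tvnorm \<mu>" "ereal Q" \<infinity>] by simp
qed


theorem lemma2p5:
  fixes u :: "('d::finite) config \<Rightarrow> real" and \<mu> :: "'d cmeasure" and p :: "int^'d"
  assumes "depends_finitely u"
    and "u \<in> borel_measurable OmegaB"
    and "bounded (u ` Omega)"
    and "is_cborel \<mu>"
    and "VarT (cint \<mu>) < \<infinity>"
  shows "VarP p (dens u \<mu>) \<le> ereal (supabs u) * VarP p (cint \<mu>) + LipP p u * tvnorm \<mu>"
proof -
  note udep = assms(1) and um[measurable] = assms(2) and ubd = assms(3) and mu = assms(4)
  obtain m1 m2 m3 m4 where m: "\<mu> = (m1, m2, m3, m4)" by (cases \<mu>) auto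
  note c = cborelD[OF mu[unfolded m]]
  define x0 :: "'d config" where "x0 = (\<lambda>_. 0)"
  have x0: "x0 \<in> Omega" by (auto simp: x0_def Omega_def)
  define S where "S = supabs u"
  have bdd: "bdd_above ((\<lambda>x. \<bar>u x\<bar>) ` Omega)"
  proof -
    obtain a where a: "\<forall>y\<in>u ` Omega. norm y \<le> a" using ubd unfolding bounded_iff by blast
    show ?thesis unfolding bdd_above_def using a by auto
  qed
  have Sb: "\<bar>u x\<bar> \<le> S" if "x \<in> Omega" for x
    unfolding S_def supabs_def by (rule cSUP_upper[OF that bdd])
  have S0: "S \<ge> 0" using Sb[OF x0] by simp
  define Lp where "Lp = LipP p u"
  have LipSet: "ereal ((u (x(p := t)) - u (x(p := t'))) / \<bar>t - t'\<bar>) \<le> Lp"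
    if "x \<in> Omega" "t \<in> {0..1}" "t' \<in> {0..1}" "t \<noteq> t'" for x t t'
    unfolding Lp_def LipP_def
    by (rule SUP_upper2[where i="(x, t, t')"]) (use that in auto)
  have Lp0: "Lp \<ge> 0"
  proof -
    define d where "d = u (x0(p := 0)) - u (x0(p := 1))"
    have "ereal d \<le> Lp" using LipSet[OF x0, of 0 1] by (simp add: d_def)
    moreover have "ereal (- d) \<le> Lp" using LipSet[OF x0, of 1 0] by (simp add: d_def)
    ultimately show ?thesis by (cases "d \<ge> 0") (auto intro: order_trans[rotated])
  qed
  define T where "T = tvnorm \<mu>"
  obtain \<tau> where T: "T = ereal \<tau>" and \<tau>0: "\<tau> \<ge> 0"
    using tv_nonneg[of \<mu>] tv_finite[OF mu] unfolding T_def by (cases "tvnorm \<mu>") auto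
  define V where "V = VarP p (cint \<mu>)"
  have V0: "V \<ge> 0" unfolding V_def by (rule VarP_nonneg)
  have R0: "0 \<le> ereal S * V + Lp * T"
  proof -
    have "0 \<le> ereal S * V" using S0 V0 by (simp add: ereal_zero_le_0_iff)
    moreover have "0 \<le> Lp * T" using Lp0 \<tau>0 T by (simp add: ereal_zero_le_0_iff)
    ultimately show ?thesis by (rule add_nonneg_nonneg)
  qed
  have main: "ereal (cmod (cint \<mu> (\<lambda>x. complex_of_real (u x) * pderiv_at p \<phi> x))) \<le> ereal S * V + Lp * T"
    if tf: "test_fun p \<phi>" for \<phi>
  proof -
    have \<phi>dep: "depends_finitely \<phi>" and \<phi>c: "continuous_on Omega \<phi>"
      and \<phi>d: "\<And>x. x \<in> Omega \<Longrightarrow> ((\<lambda>s. \<phi> (x(p := s))) has_vector_derivative pderiv_at p \<phi> x) (at (x p) within {0..1})"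
      and \<phi>'c: "continuous_on Omega (pderiv_at p \<phi>)" and \<phi>b: "\<And>x. x \<in> Omega \<Longrightarrow> cmod (\<phi> x) \<le> 1"
      using tf unfolding test_fun_def by auto
    obtain C where C0: "C \<ge> 0" and Cb: "\<And>x. x \<in> Omega \<Longrightarrow> cmod (pderiv_at p \<phi> x) \<le> C"
      using continuous_on_compact_bound[OF Omega_compact \<phi>'c] by blast
    have \<phi>m[measurable]: "\<phi> \<in> borel_measurable OmegaB" using \<phi>c by (rule cont_meas_OmegaB)
    have \<phi>'m[measurable]: "pderiv_at p \<phi> \<in> borel_measurable OmegaB" using \<phi>'c by (rule cont_meas_OmegaB)
    define X where "X = cmod (cint \<mu> (\<lambda>x. complex_of_real (u x) * pderiv_at p \<phi> x))"
    have uphim: "(\<lambda>x. complex_of_real (u x) * pderiv_at p \<phi> x) \<in> borel_measurable OmegaB" by measurable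
    have uphib: "cmod (complex_of_real (u x) * pderiv_at p \<phi> x) \<le> S * C" if x: "x \<in> Omega" for x
      using Sb[OF x] Cb[OF x] S0 C0 by (simp add: norm_mult mult_mono)
    have Xz: "ereal (cmod (cint \<mu> (\<lambda>x. complex_of_real (u x) * pderiv_at p \<phi> x))) \<le> ereal S * V + Lp * T"
      if "X = 0" using that R0 unfolding X_def by (simp add: zero_ereal_def)
    show ?thesis
    proof (cases "\<tau> = 0")
      case True
      have "X \<le> (S * C + 1) * \<tau>" unfolding X_def
      proof (rule tv_scale[OF mu T[unfolded T_def] uphim])
        fix x :: "'d config" assume x: "x \<in> Omega"
        show "cmod (complex_of_real (u x) * pderiv_at p \<phi> x) \<le> S * C + 1" using uphib[OF x] by simp
      next
        show "0 < S * C + 1" using S0 C0 by (simp add: add_nonneg_pos)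
      qed
      then have "X = 0" using True unfolding X_def by simp
      then show ?thesis by (rule Xz)
    next
      case \<tau>pos: False
      then have \<tau>p: "\<tau> > 0" using \<tau>0 by simp
      have SV0: "0 \<le> ereal S * V" using S0 V0 by (simp add: ereal_zero_le_0_iff)
      show ?thesis
      proof (cases "Lp = \<infinity>")
        case True
        then have "Lp * T = \<infinity>" using T \<tau>p by simp
        then have R: "ereal S * V + Lp * T = \<infinity>" using SV0 by simp
        show ?thesis unfolding R by simp
      next
        case LpF: False
        obtain lv where lv: "Lp = ereal lv" and lv0: "lv \<ge> 0" using Lp0 LpF by (cases Lp) auto
        show ?thesis
        proof (cases "V = \<infinity>")
          case True
          show ?thesis
          proof (cases "S = 0")
            case False
            then have "ereal S * V = \<infinity>" using True S0 by simp
            then have R: "ereal S * V + Lp * T = \<infinity>" using lv T lv0 \<tau>0 by simp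
            show ?thesis unfolding R by simp
          next
            case S00: True
            have "cint \<mu> (\<lambda>x. complex_of_real (u x) * pderiv_at p \<phi> x) = cint \<mu> (\<lambda>x. 0)"
              by (rule cint_cong[OF mu]) (use Sb S00 in auto)
            also have "\<dots> = 0" unfolding m cint_def by simp
            finally have "X = 0" unfolding X_def by simp
            then show ?thesis by (rule Xz)
          qed
        next
          case VF: False
          obtain v where v: "V = ereal v" and v0: "v \<ge> 0" using V0 VF by (cases V) auto
          have Lip: "u (x(p:=t)) - u (x(p:=t')) \<le> lv * \<bar>t - t'\<bar>"
            if x: "x \<in> Omega" and t: "t \<in> {0..1}" and t': "t' \<in> {0..1}" for x t t'
          proof (cases "t = t'")
            case True then show ?thesis by simp
          next
            case False
            have "ereal ((u (x(p := t)) - u (x(p := t'))) / \<bar>t - t'\<bar>) \<le> ereal lv"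
              using LipSet[OF x t t' False] lv by simp
            then have "(u (x(p := t)) - u (x(p := t'))) / \<bar>t - t'\<bar> \<le> lv" by simp
            then show ?thesis using False by (simp add: pos_divide_le_eq)
          qed
          obtain F where F: "finite F" and depF: "\<forall>x\<in>Omega. \<forall>y\<in>Omega. (\<forall>q\<in>F. x q = y q) \<longrightarrow> u x = u y"
            using udep unfolding depends_finitely_def by blast
          have dep: "u x = u y" if "x \<in> Omega" "y \<in> Omega" "\<forall>q\<in>F. x q = y q" for x y
            using depF that by blast
          have "X \<le> S * v + lv * \<tau>"
          proof (rule field_le_epsilon)
            fix \<epsilon> :: real assume \<epsilon>: "\<epsilon> > 0"
            define e' where "e' = \<epsilon> / (16 * (C + 1))"
            have e'0: "e' > 0" unfolding e'_def using \<epsilon> C0 by (simp add: add_nonneg_pos)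
            define ms where "ms = {m1, m2, m3, m4}"
            have msf: "finite ms" unfolding ms_def by simp
            have msp: "finite_measure m \<and> sets m = sets OmegaB" if "m \<in> ms" for m
              using that c unfolding ms_def by auto
            obtain w w' where wc: "continuous_on Omega w" and wdep: "depends_finitely w"
              and wb: "\<forall>x\<in>Omega. \<bar>w x\<bar> \<le> S" and w'c: "continuous_on Omega w'" and w'b: "\<forall>x\<in>Omega. \<bar>w' x\<bar> \<le> lv"
              and wd: "\<forall>x\<in>Omega. ((\<lambda>s. w (x(p := s))) has_real_derivative w' x) (at (x p))"
              and werr: "\<forall>m\<in>ms. (\<integral>x. \<bar>w x - u x\<bar> \<partial>m) < e'"
              using approx_u[OF F dep um Sb Lip lv0 msf msp e'0] by blast
            have wm[measurable]: "w \<in> borel_measurable OmegaB" using wc by (rule cont_meas_OmegaB)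
            have w'm[measurable]: "w' \<in> borel_measurable OmegaB" using w'c by (rule cont_meas_OmegaB)
            define \<psi> where "\<psi> x = complex_of_real (w x) * \<phi> x" for x
            define \<psi>' where "\<psi>' x = complex_of_real (w x) * pderiv_at p \<phi> x + complex_of_real (w' x) * \<phi> x" for x
            define W2 where "W2 x = complex_of_real (w' x) * \<phi> x" for x
            define r where "r x = complex_of_real (u x - w x) * pderiv_at p \<phi> x" for x
            have \<psi>d: "((\<lambda>s. \<psi> (x(p := s))) has_vector_derivative \<psi>' x) (at (x p) within {0..1})" if x: "x \<in> Omega" for x
            proof -
              have D1: "((\<lambda>s. complex_of_real (w (x(p := s)))) has_vector_derivative complex_of_real (w' x)) (at (x p) within {0..1})"
                by (rule has_vector_derivative_of_real) (rule has_field_derivative_at_within[OF wd[rule_format, OF x]])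
              have "((\<lambda>s. complex_of_real (w (x(p := s))) * \<phi> (x(p := s))) has_vector_derivative
                  (complex_of_real (w (x(p := x p))) * pderiv_at p \<phi> x + complex_of_real (w' x) * \<phi> (x(p := x p)))) (at (x p) within {0..1})"
                by (rule has_vector_derivative_mult[OF D1 \<phi>d[OF x]])
              then show ?thesis unfolding \<psi>_def \<psi>'_def by simp
            qed
            have \<psi>pd: "pderiv_at p \<psi> x = \<psi>' x" if x: "x \<in> Omega" for x
              unfolding pderiv_at_def by (rule vd01) (use x Omega_D \<psi>d in auto)
            have \<psi>c: "continuous_on Omega \<psi>" unfolding \<psi>_def by (intro continuous_intros wc \<phi>c)
            have \<psi>'c: "continuous_on Omega \<psi>'" unfolding \<psi>'_def by (intro continuous_intros wc w'c \<phi>c \<phi>'c)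
            have pdc: "continuous_on Omega (pderiv_at p \<psi>)"
              by (rule continuous_on_cong[OF refl \<psi>pd, THEN iffD2]) (auto intro: \<psi>'c)
            have \<psi>dep: "depends_finitely \<psi>"
            proof -
              obtain Fw where Fw: "finite Fw" "\<forall>x\<in>Omega. \<forall>y\<in>Omega. (\<forall>q\<in>Fw. x q = y q) \<longrightarrow> w x = w y"
                using wdep unfolding depends_finitely_def by blast
              obtain Fp where Fp: "finite Fp" "\<forall>x\<in>Omega. \<forall>y\<in>Omega. (\<forall>q\<in>Fp. x q = y q) \<longrightarrow> \<phi> x = \<phi> y"
                using \<phi>dep unfolding depends_finitely_def by blast
              show ?thesis unfolding depends_finitely_def
              proof (intro exI[of _ "Fw \<union> Fp"] conjI ballI impI)
                show "finite (Fw \<union> Fp)" using Fw Fp by simp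
                fix x y :: "'d config" assume x: "x \<in> Omega" and y: "y \<in> Omega" and xy: "\<forall>q\<in>Fw \<union> Fp. x q = y q"
                have "w x = w y" using Fw(2) x y xy by blast
                moreover have "\<phi> x = \<phi> y" using Fp(2) x y xy by blast
                ultimately show "\<psi> x = \<psi> y" unfolding \<psi>_def by simp
              qed
            qed
            define \<eta>1 where "\<eta>1 = \<epsilon> / (4 * (v + 1))"
            have \<eta>1: "\<eta>1 > 0" unfolding \<eta>1_def using \<epsilon> v0 by (simp add: add_nonneg_pos)
            have A: "cmod (cint \<mu> (pderiv_at p \<psi>)) \<le> (S + \<eta>1) * v"
            proof (rule var_scale[OF mu v[unfolded V_def] \<psi>dep \<psi>c _ pdc])
              fix x :: "'d config" assume x: "x \<in> Omega"
              show "((\<lambda>s. \<psi> (x(p := s))) has_vector_derivative pderiv_at p \<psi> x) (at (x p) within {0..1})"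
                using \<psi>d[OF x] \<psi>pd[OF x] by simp
              have "cmod (\<psi> x) = \<bar>w x\<bar> * cmod (\<phi> x)" unfolding \<psi>_def by (simp add: norm_mult)
              also have "\<dots> \<le> S * 1" using wb x \<phi>b[OF x] S0 by (intro mult_mono) auto
              finally show "cmod (\<psi> x) \<le> S + \<eta>1" using \<eta>1 by simp
            next
              show "S + \<eta>1 > 0" using S0 \<eta>1 by simp
            qed
            have A1: "cint \<mu> (pderiv_at p \<psi>) = cint \<mu> \<psi>'" by (rule cint_cong[OF mu \<psi>pd])
            have A2: "(S + \<eta>1) * v \<le> S * v + \<epsilon> / 4"
            proof -
              have "\<eta>1 * v \<le> \<epsilon> / 4" unfolding \<eta>1_def using \<epsilon> v0 by (simp add: field_simps)
              then show ?thesis by (simp add: algebra_simps)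
            qed
            define \<eta>2 where "\<eta>2 = \<epsilon> / (4 * (\<tau> + 1))"
            have \<eta>2: "\<eta>2 > 0" unfolding \<eta>2_def using \<epsilon> \<tau>0 by (simp add: add_nonneg_pos)
            have W2m: "W2 \<in> borel_measurable OmegaB" unfolding W2_def by measurable
            have W2b: "cmod (W2 x) \<le> lv" if x: "x \<in> Omega" for x
            proof -
              have "cmod (W2 x) = \<bar>w' x\<bar> * cmod (\<phi> x)" unfolding W2_def by (simp add: norm_mult)
              also have "\<dots> \<le> lv * 1" using w'b x \<phi>b[OF x] lv0 by (intro mult_mono) auto
              finally show ?thesis by simp
            qed
            have B: "cmod (cint \<mu> W2) \<le> (lv + \<eta>2) * \<tau>"
              by (rule tv_scale[OF mu T[unfolded T_def] W2m]) (use W2b \<eta>2 lv0 in \<open>force, simp add: add_nonneg_pos\<close>)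
            have B2: "(lv + \<eta>2) * \<tau> \<le> lv * \<tau> + \<epsilon> / 4"
            proof -
              have "\<eta>2 * \<tau> \<le> \<epsilon> / 4" unfolding \<eta>2_def using \<epsilon> \<tau>0 by (simp add: field_simps)
              then show ?thesis by (simp add: algebra_simps)
            qed
            have rm: "r \<in> borel_measurable OmegaB" unfolding r_def by measurable
            have rb: "cmod (r x) \<le> C * \<bar>w x - u x\<bar>" if x: "x \<in> Omega" for x
            proof -
              have "cmod (r x) = \<bar>u x - w x\<bar> * cmod (pderiv_at p \<phi> x)" unfolding r_def norm_mult norm_of_real ..
              also have "\<dots> \<le> \<bar>w x - u x\<bar> * C" using Cb[OF x] by (simp add: abs_minus_commute mult_left_mono)
              finally show ?thesis by (simp add: mult.commute)
            qed
            have rint: "(\<integral>x. cmod (r x) \<partial>mi) \<le> C * e'" if mi: "mi \<in> ms" for mi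
            proof -
              have fm: "finite_measure mi" and sm: "sets mi = sets OmegaB" using msp[OF mi] by auto
              have i1: "integrable mi (\<lambda>x. cmod (r x))"
              proof (rule intc[OF fm sm, where B="C * (S + S)"])
                show "(\<lambda>x. cmod (r x)) \<in> borel_measurable OmegaB" using rm by measurable
                fix x :: "'d config" assume x: "x \<in> Omega"
                have "\<bar>w x - u x\<bar> \<le> S + S" using wb x Sb[OF x] by (smt (verit))
                then have "C * \<bar>w x - u x\<bar> \<le> C * (S + S)" using C0 by (rule mult_left_mono)
                then show "norm (cmod (r x)) \<le> C * (S + S)" using rb[OF x] by simp
              qed
              have i2: "integrable mi (\<lambda>x. \<bar>w x - u x\<bar>)"
              proof (rule intc[OF fm sm, where B="S + S"])
                show "(\<lambda>x. \<bar>w x - u x\<bar>) \<in> borel_measurable OmegaB" by measurable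
                fix x :: "'d config" assume x: "x \<in> Omega"
                show "norm \<bar>w x - u x\<bar> \<le> S + S" using wb x Sb[OF x] by (smt (verit) real_norm_def)
              qed
              have "(\<integral>x. cmod (r x) \<partial>mi) \<le> (\<integral>x. C * \<bar>w x - u x\<bar> \<partial>mi)"
                by (rule integral_mono_AE[OF i1 integrable_mult_right[OF i2]])
                   (use rb space_m[OF sm] in \<open>auto intro: AE_I2\<close>)
              also have "\<dots> = C * (\<integral>x. \<bar>w x - u x\<bar> \<partial>mi)" by simp
              also have "\<dots> \<le> C * e'" using werr mi C0 by (intro mult_left_mono) auto
              finally show ?thesis .
            qed
            have Cr: "cmod (cint \<mu> r) \<le> \<epsilon> / 4"
            proof -
              have "cmod (cint \<mu> r) \<le> C * e' + C * e' + C * e' + C * e'"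
                using cint_bound[of m1 m2 m3 m4 r] rint[of m1] rint[of m2] rint[of m3] rint[of m4]
                unfolding m ms_def by simp
              also have "\<dots> = 4 * C * e'" by simp
              also have "\<dots> = \<epsilon> / 4 * (C / (C + 1))"
              proof -
                have hC: "C + 1 \<noteq> 0" using C0 by simp
                show ?thesis unfolding e'_def using hC by (simp add: divide_simps)
              qed
              also have "\<dots> \<le> \<epsilon> / 4 * 1" using \<epsilon> C0 by (intro mult_left_mono) auto
              finally show ?thesis by simp
            qed
            have \<psi>'m: "\<psi>' \<in> borel_measurable OmegaB" using \<psi>'c by (rule cont_meas_OmegaB)
            have g1: "goodc \<mu> \<psi>'" unfolding goodc_def
            proof (intro conjI exI ballI)
              show "\<psi>' \<in> borel_measurable OmegaB" by (rule \<psi>'m)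
              fix x :: "'d config" assume x: "x \<in> Omega"
              have "cmod (\<psi>' x) \<le> cmod (complex_of_real (w x) * pderiv_at p \<phi> x) + cmod (W2 x)"
                unfolding \<psi>'_def W2_def by (rule norm_triangle_ineq)
              also have "cmod (complex_of_real (w x) * pderiv_at p \<phi> x) \<le> S * C"
                using wb x Cb[OF x] S0 C0 by (simp add: norm_mult mult_mono)
              finally show "cmod (\<psi>' x) \<le> S * C + lv" using W2b[OF x] by simp
            qed
            have g2: "goodc \<mu> W2" unfolding goodc_def using W2m W2b by blast
            have g3: "goodc \<mu> r" unfolding goodc_def
            proof (intro conjI exI ballI)
              show "r \<in> borel_measurable OmegaB" by (rule rm)
              fix x :: "'d config" assume x: "x \<in> Omega"
              have "\<bar>w x - u x\<bar> \<le> S + S" using wb x Sb[OF x] by (smt (verit))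
              then have "C * \<bar>w x - u x\<bar> \<le> C * (S + S)" using C0 by (rule mult_left_mono)
              then show "cmod (r x) \<le> C * (S + S)" using rb[OF x] by simp
            qed
            have g12: "goodc \<mu> (\<lambda>x. \<psi>' x - W2 x)" unfolding goodc_def
            proof (intro conjI exI ballI)
              show "(\<lambda>x. \<psi>' x - W2 x) \<in> borel_measurable OmegaB" using \<psi>'m W2m by measurable
              fix x :: "'d config" assume x: "x \<in> Omega"
              have "cmod (\<psi>' x - W2 x) = cmod (complex_of_real (w x) * pderiv_at p \<phi> x)"
                unfolding \<psi>'_def W2_def by simp
              also have "\<dots> \<le> S * C"
                using wb x Cb[OF x] S0 C0 by (simp add: norm_mult mult_mono)
              finally show "cmod (\<psi>' x - W2 x) \<le> S * C" .
            qed
            have "cint \<mu> (\<lambda>x. complex_of_real (u x) * pderiv_at p \<phi> x) = cint \<mu> (\<lambda>x. (\<psi>' x - W2 x) + r x)"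
              by (rule cint_cong[OF mu]) (simp add: \<psi>'_def W2_def r_def algebra_simps)
            also have "\<dots> = cint \<mu> (\<lambda>x. \<psi>' x - W2 x) + cint \<mu> r" by (rule cint_add[OF mu g12 g3])
            also have "cint \<mu> (\<lambda>x. \<psi>' x - W2 x) = cint \<mu> \<psi>' - cint \<mu> W2" by (rule cint_diff[OF mu g1 g2])
            finally have dec: "cint \<mu> (\<lambda>x. complex_of_real (u x) * pderiv_at p \<phi> x) = cint \<mu> \<psi>' - cint \<mu> W2 + cint \<mu> r" .
            have "X \<le> cmod (cint \<mu> \<psi>') + cmod (cint \<mu> W2) + cmod (cint \<mu> r)"
              unfolding X_def dec by (smt (verit) norm_triangle_ineq norm_triangle_ineq4)
            also have "\<dots> \<le> (S * v + \<epsilon> / 4) + (lv * \<tau> + \<epsilon> / 4) + \<epsilon> / 4"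
              using A[unfolded A1] A2 B B2 Cr by linarith
            also have "\<dots> \<le> S * v + lv * \<tau> + \<epsilon>" using \<epsilon> by simp
            finally show "X \<le> S * v + lv * \<tau> + \<epsilon>" .
          qed
          then show ?thesis using v lv T unfolding X_def by simp
        qed
      qed
    qed
  qed
  show ?thesis
    unfolding VarP_def[of p "dens u \<mu>"] S_def[symmetric] V_def[symmetric] Lp_def[symmetric] T_def[symmetric]
    by (rule SUP_least) (use main in \<open>auto simp: dens_def\<close>)
qed

end
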